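(* Let $d\in\mathbb N$, $\mu_0$ a probability measure on $\mathbb R^d$ with Lebesgue density $\pi_0\in C^4(\mathbb R^d,\mathbb R)$, $S_0=\{\pi_0>0\}$, and $\Phi:\mathbb R^d\to\mathbb R$. Let $\mu_n(dx)=Z_n^{-1}\exp(-n\Phi(x))\mu_0(dx)$, $Z_n=\int\exp(-n\Phi)d\mu_0$. Assume: there is $x_\star$ in the interior of $S_0$ such that for every $r>0$, $\inf_{x\in S_0,\|x-x_\star\|>r}\Phi(x)-\Phi(x_\star)>0$; $\Phi$ is five times continuously differentiable in a neighborhood of $x_\star$ and $\nabla^2\Phi(x_\star)$ is positive definite; $\pi_0(x_\star)\neq0$. Let $f\in C^4(\mathbb R^d,\mathbb R)\cap L^1_{\mu_0}(\mathbb R)$ with $\nabla f(x_\star)\ne0$, and assume the integrals $\int_{S_0}|g(x)|e^{-n\Phi(x)}dx$ are finite for all $n$ and $g\in\{\pi_0,f\pi_0,f^2\pi_0\}$. Then there exists $\tilde c_f>0$ with $$\sigma^2_{\mu_n,\mu_0}(f)\sim\tilde c_f\,n^{d/2-1}\quad(n\to\infty),$$ and there exists another constant $\tilde c_f'>0$ with $\sigma^2_{\mu_n,\mu_0}(f)/\mathrm{Var}_{\mu_n}(f)\sim\tilde c_f' n^{d/2}$.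
   Context: For probability measures $\mu\ll\nu$ and $f$, the asymptotic variance of self-normalized importance sampling is $\sigma^2_{\mu,\nu}(f)=\mathbb E_\nu\big[(\tfrac{d\mu}{d\nu})^2(f-\mathbb E_\mu[f])^2\big]$. $g(n)\sim h(n)$ means $\lim_{n\to\infty}g(n)/h(n)=1$. $\mathrm{Var}_{\mu_n}(f)=\mathbb E_{\mu_n}[f^2]-\mathbb E_{\mu_n}[f]^2$. *)

theory Defs
  imports "HOL-Probability.Probability" "HOL-Library.Landau_Symbols"
begin

fun Ck_on :: "nat \<Rightarrow> 'a::euclidean_space set \<Rightarrow> ('a \<Rightarrow> real) \<Rightarrow> bool" where
  "Ck_on 0 U f = continuous_on U f"
| "Ck_on (Suc k) U f = (f differentiable_on U \<and>
      (\<forall>b\<in>Basis. Ck_on k U (\<lambda>x. frechet_derivative f (at x) b)))"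

definition hessian_entry :: "('a::euclidean_space \<Rightarrow> real) \<Rightarrow> 'a \<Rightarrow> 'a \<Rightarrow> 'a \<Rightarrow> real" where
  "hessian_entry F x u v = frechet_derivative (\<lambda>y. frechet_derivative F (at y) u) (at x) v"

definition hessian_pos_def :: "('a::euclidean_space \<Rightarrow> real) \<Rightarrow> 'a \<Rightarrow> bool" where
  "hessian_pos_def F x = (\<forall>v. v \<noteq> 0 \<longrightarrow>
      (\<Sum>i\<in>Basis. \<Sum>j\<in>Basis. (v \<bullet> i) * (v \<bullet> j) * hessian_entry F x i j) > 0)"

text \<open>Asymptotic variance of self-normalised importance sampling (target mu, proposal nu).\<close>
definition snis_asym_var :: "'a measure \<Rightarrow> 'a measure \<Rightarrow> ('a \<Rightarrow> real) \<Rightarrow> real" where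
  "snis_asym_var \<mu> \<nu> f =
     (\<integral>x. (enn2real (RN_deriv \<nu> \<mu> x))\<^sup>2 * (f x - (\<integral>y. f y \<partial>\<mu>))\<^sup>2 \<partial>\<nu>)"

definition var_meas :: "'a measure \<Rightarrow> ('a \<Rightarrow> real) \<Rightarrow> real" where
  "var_meas \<mu> f = (\<integral>x. (f x)\<^sup>2 \<partial>\<mu>) - (\<integral>x. f x \<partial>\<mu>)\<^sup>2"

definition prior :: "('a::euclidean_space \<Rightarrow> real) \<Rightarrow> 'a measure" where
  "prior pi0 = density lborel (\<lambda>x. ennreal (pi0 x))"

definition Zn :: "('a::euclidean_space \<Rightarrow> real) \<Rightarrow> ('a \<Rightarrow> real) \<Rightarrow> nat \<Rightarrow> real" where
  "Zn pi0 \<Phi> n = (\<integral>x. exp (- real n * \<Phi> x) \<partial>(prior pi0))"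

definition post :: "('a::euclidean_space \<Rightarrow> real) \<Rightarrow> ('a \<Rightarrow> real) \<Rightarrow> nat \<Rightarrow> 'a measure" where
  "post pi0 \<Phi> n = density (prior pi0) (\<lambda>x. ennreal (exp (- real n * \<Phi> x) / Zn pi0 \<Phi> n))"

end

theory Submission
  imports Defs "HOL-Real_Asymp.Real_Asymp"
begin

lemma Ck_cont: "Ck_on k U g \<Longrightarrow> continuous_on U g"
  by (cases k) (auto intro: differentiable_imp_continuous_on)

lemma Ck_Suc_mono: "Ck_on (Suc k) U g \<Longrightarrow> Ck_on k U g"
proof (induction k arbitrary: g)
  case 0 then show ?case by (auto intro: differentiable_imp_continuous_on)
next
  case (Suc k) then show ?case by auto
qed

lemma Ck_mono: "Ck_on k U g \<Longrightarrow> j \<le> k \<Longrightarrow> Ck_on j U g"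
proof (induction k)
  case 0 then show ?case by simp
next
  case (Suc k) then show ?case using Ck_Suc_mono by (metis le_Suc_eq)
qed

lemma Ck_diff: "Ck_on k U g \<Longrightarrow> 1 \<le> k \<Longrightarrow> open U \<Longrightarrow> x \<in> U \<Longrightarrow> g differentiable at x"
  by (cases k) (auto simp: differentiable_on_eq_differentiable_at)

lemma Ck_part: "Ck_on k U g \<Longrightarrow> 1 \<le> k \<Longrightarrow> b \<in> Basis \<Longrightarrow>
    Ck_on (k - 1) U (\<lambda>x. frechet_derivative g (at x) b)"
  by (cases k) auto

lemma frechet_expand:
  fixes g :: "'a::euclidean_space \<Rightarrow> real"
  assumes "g differentiable at x"
  shows "frechet_derivative g (at x) h = (\<Sum>b\<in>Basis. (h \<bullet> b) * frechet_derivative g (at x) b)"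
proof -
  have "bounded_linear (frechet_derivative g (at x))"
    using assms frechet_derivative_works has_derivative_bounded_linear by blast
  then interpret L: bounded_linear "frechet_derivative g (at x)" .
  have "frechet_derivative g (at x) h = frechet_derivative g (at x) (\<Sum>b\<in>Basis. (h \<bullet> b) *\<^sub>R b)"
    by (simp add: euclidean_representation)
  also have "\<dots> = (\<Sum>b\<in>Basis. (h \<bullet> b) * frechet_derivative g (at x) b)"
    by (simp add: L.sum L.scaleR)
  finally show ?thesis .
qed

lemma deriv_line:
  fixes g :: "'a::euclidean_space \<Rightarrow> real"
  assumes "g differentiable at (x + t *\<^sub>R h)"
  shows "((\<lambda>s. g (x + s *\<^sub>R h)) has_real_derivative
           (\<Sum>b\<in>Basis. (h \<bullet> b) * frechet_derivative g (at (x + t *\<^sub>R h)) b)) (at t)"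
proof -
  let ?D = "frechet_derivative g (at (x + t *\<^sub>R h))"
  have gd: "(g has_derivative ?D) (at (x + t *\<^sub>R h))"
    using assms frechet_derivative_works by blast
  then have bl: "bounded_linear ?D" using has_derivative_bounded_linear by blast
  then interpret L: bounded_linear ?D .
  have "((\<lambda>s. x + s *\<^sub>R h) has_derivative (\<lambda>s. s *\<^sub>R h)) (at t)"
    by (auto intro!: derivative_eq_intros)
  from has_derivative_compose[OF this gd]
  have "((\<lambda>s. g (x + s *\<^sub>R h)) has_derivative (\<lambda>s. ?D (s *\<^sub>R h))) (at t)" .
  moreover have "(\<lambda>s. ?D (s *\<^sub>R h)) = (*) (?D h)"
    by (simp add: L.scaleR fun_eq_iff mult.commute)
  ultimately have "((\<lambda>s. g (x + s *\<^sub>R h)) has_real_derivative ?D h) (at t)"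
    by (simp add: has_field_derivative_def)
  then show ?thesis using frechet_expand[OF assms, of h] by simp
qed

locale lap =
  fixes pi0 \<Phi> f :: "'a::euclidean_space \<Rightarrow> real" and xs :: 'a
  assumes pi0_nonneg: "\<And>x. pi0 x \<ge> 0"
    and prob: "prob_space (prior pi0)"
    and pi0_C4: "Ck_on 4 UNIV pi0"
    and Phi_meas: "\<Phi> \<in> borel_measurable borel"
    and xs_int: "xs \<in> interior {x. pi0 x > 0}"
    and sep: "\<And>r. r > 0 \<Longrightarrow> \<exists>\<delta>>0. \<forall>x\<in>{x. pi0 x > 0}. dist x xs > r \<longrightarrow> \<Phi> x - \<Phi> xs \<ge> \<delta>"
    and Phi_C5: "\<exists>U. open U \<and> xs \<in> U \<and> Ck_on 5 U \<Phi>"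
    and hess: "hessian_pos_def \<Phi> xs"
    and pi0_xs: "pi0 xs \<noteq> 0"
    and f_C4: "Ck_on 4 UNIV f"
    and f_L1: "integrable (prior pi0) f"
    and grad: "frechet_derivative f (at xs) \<noteq> (\<lambda>_. 0)"
    and fin: "\<And>n g. n \<ge> 1 \<Longrightarrow> g \<in> {pi0, (\<lambda>x. f x * pi0 x), (\<lambda>x. (f x)\<^sup>2 * pi0 x)} \<Longrightarrow>
               set_integrable lborel {x. pi0 x > 0} (\<lambda>x. g x * exp (- real n * \<Phi> x))"
begin

definition "UU = (SOME U. open U \<and> xs \<in> U \<and> Ck_on 5 U \<Phi>)"
definition "psi x = \<Phi> x - \<Phi> xs"
definition "DP b y = frechet_derivative \<Phi> (at y) b"
definition "HH y b c = hessian_entry \<Phi> y b c"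
definition "Q z h = (\<Sum>b\<in>Basis. (h \<bullet> b) * (\<Sum>c\<in>Basis. (h \<bullet> c) * HH z b c))"
definition "Df = frechet_derivative f (at xs)"

lemma UU: "open UU" "xs \<in> UU" "Ck_on 5 UU \<Phi>"
  using someI_ex[OF Phi_C5] unfolding UU_def by auto

lemma Phi_diff: "y \<in> UU \<Longrightarrow> \<Phi> differentiable at y"
  using Ck_diff[OF UU(3) _ UU(1)] by simp

lemma DP_C4: "b \<in> Basis \<Longrightarrow> Ck_on 4 UU (DP b)"
  using Ck_part[OF UU(3)] unfolding DP_def[abs_def] by simp

lemma DP_diff: "y \<in> UU \<Longrightarrow> b \<in> Basis \<Longrightarrow> DP b differentiable at y"
  using Ck_diff[OF DP_C4[of b] _ UU(1)] by simp

lemma HH_cont: "b \<in> Basis \<Longrightarrow> c \<in> Basis \<Longrightarrow> continuous_on UU (\<lambda>y. HH y b c)"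
proof -
  assume b: "b \<in> Basis" and c: "c \<in> Basis"
  have "Ck_on 3 UU (\<lambda>y. frechet_derivative (DP b) (at y) c)"
    using Ck_part[OF DP_C4[OF b] _ c] by simp
  then have "continuous_on UU (\<lambda>y. frechet_derivative (DP b) (at y) c)" by (rule Ck_cont)
  moreover have "DP b = (\<lambda>y. frechet_derivative \<Phi> (at y) b)" by (simp add: DP_def fun_eq_iff)
  ultimately show ?thesis by (simp add: HH_def hessian_entry_def)
qed

lemma pi0_cont: "continuous_on UNIV pi0"
  using Ck_cont[OF pi0_C4] .

lemma f_diff: "f differentiable at x"
  using Ck_diff[OF f_C4] by simp

lemma f_part_cont: "b \<in> Basis \<Longrightarrow> continuous_on UNIV (\<lambda>x. frechet_derivative f (at x) b)"
  using Ck_cont[OF Ck_part[OF f_C4]] by simp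

lemma psi_pos: "pi0 x > 0 \<Longrightarrow> x \<noteq> xs \<Longrightarrow> psi x > 0"
proof -
  assume x: "pi0 x > 0" "x \<noteq> xs"
  then have "dist x xs / 2 > 0" by simp
  from sep[OF this] obtain \<delta> where "\<delta> > 0" "\<forall>y\<in>{x. pi0 x > 0}. dist y xs > dist x xs / 2 \<longrightarrow> \<Phi> y - \<Phi> xs \<ge> \<delta>"
    by blast
  moreover have "dist x xs > dist x xs / 2" using x by simp
  ultimately show ?thesis using x by (force simp: psi_def)
qed

lemma psi_nonneg: "pi0 x > 0 \<Longrightarrow> psi x \<ge> 0"
  using psi_pos[of x] by (cases "x = xs") (auto simp: psi_def)

lemma pi0_xs_pos: "pi0 xs > 0"
  using pi0_xs pi0_nonneg[of xs] by simp

lemma grad_zero: "frechet_derivative \<Phi> (at xs) = (\<lambda>h. 0)"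
proof (rule has_derivative_local_min)
  show "(\<Phi> has_derivative frechet_derivative \<Phi> (at xs)) (at xs)"
    using Phi_diff[OF UU(2)] frechet_derivative_works by blast
  obtain e where e: "e > 0" "ball xs e \<subseteq> {x. pi0 x > 0}"
    using xs_int by (meson mem_interior)
  have "eventually (\<lambda>y. y \<in> ball xs e) (at xs)"
    using e(1) by (intro eventually_at_in_open') auto
  then show "eventually (\<lambda>y. \<Phi> xs \<le> \<Phi> y) (at xs)"
    by eventually_elim (use e psi_nonneg in \<open>force simp: psi_def\<close>)
qed

lemma DP_xs: "DP b xs = 0"
  by (simp add: DP_def grad_zero)

lemma taylor:
  assumes seg: "\<And>t. 0 \<le> t \<Longrightarrow> t \<le> 1 \<Longrightarrow> xs + t *\<^sub>R h \<in> UU"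
  shows "\<exists>t. 0 < t \<and> t < 1 \<and> psi (xs + h) = Q (xs + t *\<^sub>R h) h / 2"
proof -
  define g where "g s = \<Phi> (xs + s *\<^sub>R h)" for s
  define g1 where "g1 s = (\<Sum>b\<in>Basis. (h \<bullet> b) * DP b (xs + s *\<^sub>R h))" for s
  define g2 where "g2 s = Q (xs + s *\<^sub>R h) h" for s
  define diff where "diff m = (if m = 0 then g else if m = 1 then g1 else g2)" for m :: nat
  have d1: "(g has_real_derivative g1 t) (at t)" if "0 \<le> t" "t \<le> 1" for t
    using deriv_line[OF Phi_diff[OF seg[OF that]]] unfolding g_def g1_def DP_def .
  have d2: "(g1 has_real_derivative g2 t) (at t)" if "0 \<le> t" "t \<le> 1" for t
  proof -
    have "((\<lambda>s. DP b (xs + s *\<^sub>R h)) has_real_derivative (\<Sum>c\<in>Basis. (h \<bullet> c) * HH (xs + t *\<^sub>R h) b c)) (at t)"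
      if b: "b \<in> Basis" for b
      using deriv_line[OF DP_diff[OF seg[OF \<open>0 \<le> t\<close> \<open>t \<le> 1\<close>] b]]
      by (simp add: HH_def hessian_entry_def DP_def[abs_def])
    then have "((\<lambda>s. \<Sum>b\<in>Basis. (h \<bullet> b) * DP b (xs + s *\<^sub>R h)) has_real_derivative
        (\<Sum>b\<in>Basis. (h \<bullet> b) * (\<Sum>c\<in>Basis. (h \<bullet> c) * HH (xs + t *\<^sub>R h) b c))) (at t)"
      by (intro DERIV_sum DERIV_cmult) auto
    then show ?thesis unfolding g1_def[abs_def] g2_def Q_def .
  qed
  have "\<exists>t. 0 < t \<and> t < 1 \<and>
      g 1 = (\<Sum>m<2. (diff m 0 / fact m) * 1 ^ m) + (diff 2 t / fact 2) * 1 ^ 2"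
    by (rule Maclaurin) (auto simp: diff_def d1 d2 less_2_cases_iff)
  then obtain t where t: "0 < t" "t < 1" "g 1 = g 0 + g1 0 + g2 t / 2"
    by (auto simp: diff_def numeral_2_eq_2)
  have "g1 0 = 0" by (simp add: g1_def DP_xs)
  then show ?thesis using t by (intro exI[of _ t]) (auto simp: g_def g2_def psi_def)
qed

end

context lap begin

lemma Q_homog: "Q z (a *\<^sub>R h) = a\<^sup>2 * Q z h"
  by (simp add: Q_def sum_distrib_left power2_eq_square algebra_simps)

lemma Q_cont: "continuous_on UNIV (Q z)"
  unfolding Q_def by (intro continuous_intros)

lemma Q_neg: "Q z (- h) = Q z h"
  using Q_homog[of z "-1" h] by simp

lemma Q_pos: "h \<noteq> 0 \<Longrightarrow> Q xs h > 0"
proof -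
  assume h: "h \<noteq> 0"
  have "Q xs h = (\<Sum>i\<in>Basis. \<Sum>j\<in>Basis. (h \<bullet> i) * (h \<bullet> j) * hessian_entry \<Phi> xs i j)"
    by (simp add: Q_def HH_def sum_distrib_left mult.assoc)
  then show ?thesis using hess h unfolding hessian_pos_def_def by simp
qed

lemma lam0: "\<exists>\<kappa>>0. \<forall>h. Q xs h \<ge> \<kappa> * (norm h)\<^sup>2"
proof -
  obtain b :: 'a where b: "b \<in> Basis" using nonempty_Basis by blast
  have ne: "sphere (0::'a) 1 \<noteq> {}" using b by (auto intro!: exI[of _ b])
  obtain x0 where x0: "x0 \<in> sphere 0 1" "\<forall>y\<in>sphere 0 1. Q xs x0 \<le> Q xs y"
    using continuous_attains_inf[OF compact_sphere ne continuous_on_subset[OF Q_cont]] by blast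
  have "x0 \<noteq> 0" using x0(1) by auto
  then have pos: "Q xs x0 > 0" by (rule Q_pos)
  have "Q xs h \<ge> Q xs x0 * (norm h)\<^sup>2" for h
  proof (cases "h = 0")
    case True then show ?thesis by (simp add: Q_def)
  next
    case False
    have "Q xs h = Q xs (norm h *\<^sub>R (inverse (norm h) *\<^sub>R h))" using False by simp
    also have "\<dots> = (norm h)\<^sup>2 * Q xs (inverse (norm h) *\<^sub>R h)" by (rule Q_homog)
    also have "\<dots> \<ge> (norm h)\<^sup>2 * Q xs x0"
      using x0(2) False by (intro mult_left_mono) (auto simp: norm_scaleR)
    finally show ?thesis by (simp add: mult.commute)
  qed
  then show ?thesis using pos by blast
qed

lemma Q_unif:
  assumes "\<epsilon> > 0"
  shows "\<exists>\<rho>>0. \<forall>z h. dist z xs < \<rho> \<longrightarrow> \<bar>Q z h - Q xs h\<bar> \<le> \<epsilon> * (norm h)\<^sup>2"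
proof -
  define d where "d = real DIM('a)"
  have d: "d \<ge> 1" unfolding d_def using DIM_positive by (simp add: Suc_le_eq)
  define e where "e = \<epsilon> / d\<^sup>2"
  have e: "e > 0" using assms d by (simp add: e_def)
  have "\<forall>b\<in>Basis. \<forall>c\<in>Basis. eventually (\<lambda>z. dist (HH z b c) (HH xs b c) < e) (nhds xs)"
  proof (intro ballI)
    fix b c :: 'a assume "b \<in> Basis" "c \<in> Basis"
    then have "isCont (\<lambda>y. HH y b c) xs"
      using HH_cont UU continuous_on_eq_continuous_at by blast
    then show "eventually (\<lambda>z. dist (HH z b c) (HH xs b c) < e) (nhds xs)"
      using e unfolding isCont_def eventually_nhds_conv_at by (auto intro: tendstoD)
  qed
  then have "eventually (\<lambda>z. \<forall>b\<in>Basis. \<forall>c\<in>Basis. dist (HH z b c) (HH xs b c) < e) (nhds xs)"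
    by (simp add: eventually_ball_finite_distrib)
  then obtain \<rho> where \<rho>: "\<rho> > 0" "\<And>z. dist z xs < \<rho> \<Longrightarrow> \<forall>b\<in>Basis. \<forall>c\<in>Basis. dist (HH z b c) (HH xs b c) < e"
    unfolding eventually_nhds_metric by blast
  have "\<bar>Q z h - Q xs h\<bar> \<le> \<epsilon> * (norm h)\<^sup>2" if z: "dist z xs < \<rho>" for z h
  proof -
    have "Q z h - Q xs h = (\<Sum>b\<in>Basis. \<Sum>c\<in>Basis. (h \<bullet> b) * (h \<bullet> c) * (HH z b c - HH xs b c))"
      by (simp add: Q_def sum_distrib_left algebra_simps sum_subtractf)
    also have "\<bar>\<dots>\<bar> \<le> (\<Sum>b\<in>(Basis::'a set). \<Sum>c\<in>(Basis::'a set). (norm h)\<^sup>2 * e)"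
    proof -
      have "\<bar>(h \<bullet> b) * (h \<bullet> c) * (HH z b c - HH xs b c)\<bar> \<le> (norm h)\<^sup>2 * e"
        if "b \<in> Basis" "c \<in> Basis" for b c
      proof -
        have "\<bar>h \<bullet> b\<bar> \<le> norm h" "\<bar>h \<bullet> c\<bar> \<le> norm h" using that by (auto intro: Basis_le_norm)
        moreover have "\<bar>HH z b c - HH xs b c\<bar> \<le> e" using \<rho>(2)[OF z] that by (force simp: dist_real_def)
        ultimately show ?thesis
          by (auto simp: abs_mult power2_eq_square intro!: mult_mono)
      qed
      then show ?thesis
        by (intro order.trans[OF sum_abs] sum_mono order.trans[OF sum_abs]) auto
    qed
    also have "\<dots> = d\<^sup>2 * ((norm h)\<^sup>2 * e)" by (simp add: d_def power2_eq_square)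
    also have "\<dots> = \<epsilon> * (norm h)\<^sup>2" using d by (simp add: e_def)
    finally show ?thesis .
  qed
  then show ?thesis using \<rho>(1) by blast
qed

lemma ball_U: "\<exists>r0>0. cball xs r0 \<subseteq> UU \<and> cball xs r0 \<subseteq> {x. pi0 x > 0}"
proof -
  obtain e1 where e1: "e1 > 0" "ball xs e1 \<subseteq> {x. pi0 x > 0}"
    using xs_int by (meson mem_interior)
  obtain e2 where e2: "e2 > 0" "ball xs e2 \<subseteq> UU"
    using UU(1,2) open_contains_ball by blast
  define r0 where "r0 = min e1 e2 / 2"
  have "cball xs r0 \<subseteq> ball xs e1" "cball xs r0 \<subseteq> ball xs e2"
    using e1 e2 by (auto simp: r0_def)
  then show ?thesis using e1 e2 by (intro exI[of _ r0]) (auto simp: r0_def)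
qed

lemma seg_in:
  assumes "cball xs r0 \<subseteq> UU" "norm h \<le> r0" "0 \<le> t" "t \<le> 1"
  shows "xs + t *\<^sub>R h \<in> UU"
proof -
  have "norm (t *\<^sub>R h) \<le> norm h" using assms(3,4) by (simp add: mult_left_le_one_le)
  then show ?thesis using assms(1,2) by (auto simp: dist_norm)
qed

lemma lower_bound:
  "\<exists>r>0. \<exists>\<kappa>>0. cball xs r \<subseteq> UU \<and> cball xs r \<subseteq> {x. pi0 x > 0} \<and>
      (\<forall>x\<in>cball xs r. psi x \<ge> \<kappa> * (norm (x - xs))\<^sup>2)"
proof -
  obtain \<kappa> where \<kappa>: "\<kappa> > 0" "\<And>h. Q xs h \<ge> \<kappa> * (norm h)\<^sup>2" using lam0 by blast
  obtain \<rho> where \<rho>: "\<rho> > 0" "\<And>z h. dist z xs < \<rho> \<Longrightarrow> \<bar>Q z h - Q xs h\<bar> \<le> \<kappa>/2 * (norm h)\<^sup>2"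
    using Q_unif[of "\<kappa>/2"] \<kappa>(1) by auto
  obtain r0 where r0: "r0 > 0" "cball xs r0 \<subseteq> UU" "cball xs r0 \<subseteq> {x. pi0 x > 0}" using ball_U by blast
  define r where "r = min r0 (\<rho>/2)"
  have r: "r > 0" "r \<le> r0" "r < \<rho>" using r0 \<rho> by (auto simp: r_def)
  have "psi x \<ge> \<kappa>/4 * (norm (x - xs))\<^sup>2" if x: "x \<in> cball xs r" for x
  proof -
    define h where "h = x - xs"
    have nh: "norm h \<le> r" using x by (simp add: h_def dist_norm norm_minus_commute)
    obtain t where t: "0 < t" "t < 1" "psi (xs + h) = Q (xs + t *\<^sub>R h) h / 2"
      using taylor[of h] seg_in[OF r0(2)] nh r by (meson order.trans)
    have "dist (xs + t *\<^sub>R h) xs = t * norm h" using t by (simp add: dist_norm)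
    also have "\<dots> \<le> norm h" using t by (simp add: mult_left_le_one_le)
    finally have "dist (xs + t *\<^sub>R h) xs < \<rho>" using nh r by linarith
    from \<rho>(2)[OF this, of h] \<kappa>(2)[of h]
    have "Q (xs + t *\<^sub>R h) h \<ge> \<kappa>/2 * (norm h)\<^sup>2" by linarith
    then show ?thesis using t by (simp add: h_def)
  qed
  moreover have cb: "cball xs r \<subseteq> cball xs r0" using r by auto
  moreover have "cball xs r \<subseteq> UU" using cb r0(2) by (rule order.trans)
  moreover have "cball xs r \<subseteq> {x. pi0 x > 0}" using cb r0(3) by (rule order.trans)
  ultimately have "r > 0 \<and> \<kappa>/4 > 0 \<and> cball xs r \<subseteq> UU \<and> cball xs r \<subseteq> {x. pi0 x > 0} \<and>
      (\<forall>x\<in>cball xs r. psi x \<ge> \<kappa>/4 * (norm (x - xs))\<^sup>2)"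
    using r r0 \<kappa> by auto
  then show ?thesis by blast
qed

lemma psi_limit: "(\<lambda>n. real n * psi (xs + inverse (sqrt (real n)) *\<^sub>R y)) \<longlonglongrightarrow> Q xs y / 2"
proof (rule LIMSEQ_I)
  fix \<epsilon> :: real assume \<epsilon>: "\<epsilon> > 0"
  define \<epsilon>' where "\<epsilon>' = \<epsilon> / ((norm y)\<^sup>2 + 1)"
  have "(norm y)\<^sup>2 + 1 > 0" by (simp add: add_nonneg_pos)
  then have \<epsilon>': "\<epsilon>' > 0" using \<epsilon> by (simp add: \<epsilon>'_def)
  obtain \<rho> where \<rho>: "\<rho> > 0" "\<And>z h. dist z xs < \<rho> \<Longrightarrow> \<bar>Q z h - Q xs h\<bar> \<le> \<epsilon>' * (norm h)\<^sup>2"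
    using Q_unif[OF \<epsilon>'] by auto
  obtain r0 where r0: "r0 > 0" "cball xs r0 \<subseteq> UU" using ball_U by blast
  have "(\<lambda>n. inverse (sqrt (real n))) \<longlonglongrightarrow> 0" by real_asymp
  then have "(\<lambda>n. inverse (sqrt (real n)) *\<^sub>R y) \<longlonglongrightarrow> 0 *\<^sub>R y"
    by (intro tendsto_scaleR tendsto_const)
  then have "(\<lambda>n. inverse (sqrt (real n)) *\<^sub>R y) \<longlonglongrightarrow> 0" by simp
  then have ev: "eventually (\<lambda>n. norm (inverse (sqrt (real n)) *\<^sub>R y) < min r0 \<rho>) sequentially"
    using r0 \<rho> by (auto dest!: tendstoD[of _ 0 _ "min r0 \<rho>"] simp: dist_norm)
  have ev1: "eventually (\<lambda>n. n \<ge> 1) sequentially" by (simp add: eventually_ge_at_top)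
  have "\<exists>N. \<forall>n\<ge>N. norm (inverse (sqrt (real n)) *\<^sub>R y) < min r0 \<rho> \<and> n \<ge> 1"
    using eventually_conj[OF ev ev1] unfolding eventually_sequentially .
  then obtain N where N: "\<And>n. n \<ge> N \<Longrightarrow> norm (inverse (sqrt (real n)) *\<^sub>R y) < min r0 \<rho> \<and> n \<ge> 1"
    by blast
  show "\<exists>no. \<forall>n\<ge>no. norm (real n * psi (xs + inverse (sqrt (real n)) *\<^sub>R y) - Q xs y / 2) < \<epsilon>"
  proof (intro exI allI impI)
    fix n assume "n \<ge> N"
    note Nn = N[OF this]
    define c where "c = inverse (sqrt (real n))"
    define h where "h = c *\<^sub>R y"
    have nh: "norm h < r0" "norm h < \<rho>" using Nn by (auto simp: h_def c_def)
    obtain t where t: "0 < t" "t < 1" "psi (xs + h) = Q (xs + t *\<^sub>R h) h / 2"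
      using taylor[of h] seg_in[OF r0(2)] nh by (meson less_imp_le)
    have "dist (xs + t *\<^sub>R h) xs = t * norm h" using t by (simp add: dist_norm)
    also have "\<dots> \<le> norm h" using t by (simp add: mult_left_le_one_le)
    finally have "dist (xs + t *\<^sub>R h) xs < \<rho>" using nh by linarith
    from \<rho>(2)[OF this, of y] have bnd: "\<bar>Q (xs + t *\<^sub>R h) y - Q xs y\<bar> \<le> \<epsilon>' * (norm y)\<^sup>2" .
    have nc: "real n * c\<^sup>2 = 1" using Nn by (simp add: c_def power_inverse)
    have "psi (xs + h) = c\<^sup>2 * Q (xs + t *\<^sub>R h) y / 2"
      using t(3) unfolding h_def Q_homog by simp
    then have "real n * psi (xs + h) = (real n * c\<^sup>2) * Q (xs + t *\<^sub>R h) y / 2"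
      by simp
    then have "real n * psi (xs + h) = Q (xs + t *\<^sub>R h) y / 2"
      using nc by simp
    moreover have "\<epsilon>' * (norm y)\<^sup>2 / 2 < \<epsilon>"
    proof -
      have "\<epsilon>' * (norm y)\<^sup>2 < \<epsilon>' * ((norm y)\<^sup>2 + 1)" using \<epsilon>' by simp
      also have "\<dots> = \<epsilon>" using \<open>(norm y)\<^sup>2 + 1 > 0\<close> by (simp add: \<epsilon>'_def)
      finally show ?thesis using \<epsilon> by linarith
    qed
    ultimately show "norm (real n * psi (xs + inverse (sqrt (real n)) *\<^sub>R y) - Q xs y / 2) < \<epsilon>"
      using bnd by (simp add: h_def c_def)
  qed
qed

end

context lap begin

lemma Df_expand: "Df y = (\<Sum>b\<in>Basis. (y \<bullet> b) * frechet_derivative f (at xs) b)"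
  unfolding Df_def by (rule frechet_expand[OF f_diff])

lemma Df_linear: "linear Df"
  unfolding Df_def using f_diff frechet_derivative_works has_derivative_linear by blast

lemma f_limit: "(\<lambda>n. sqrt (real n) * (f (xs + inverse (sqrt (real n)) *\<^sub>R y) - f xs)) \<longlonglongrightarrow> Df y"
proof -
  define g where "g t = f (xs + t *\<^sub>R y)" for t
  have "(g has_real_derivative Df y) (at 0)"
    using deriv_line[of f xs 0 y] f_diff unfolding g_def Df_expand by simp
  then have lim: "((\<lambda>h. (g (0 + h) - g 0) / h) \<longlongrightarrow> Df y) (at 0)"
    by (simp add: DERIV_def)
  have t0: "(\<lambda>n. inverse (sqrt (real n))) \<longlonglongrightarrow> 0" by real_asymp
  have "eventually (\<lambda>n. inverse (sqrt (real n)) \<in> UNIV - {0}) sequentially"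
    using eventually_gt_at_top[of "0::nat"] by eventually_elim simp
  then have "filterlim (\<lambda>n. inverse (sqrt (real n))) (at 0) sequentially"
    using t0 by (simp add: filterlim_at)
  from filterlim_compose[OF lim this]
  have "(\<lambda>n. (g (inverse (sqrt (real n))) - g 0) / inverse (sqrt (real n))) \<longlonglongrightarrow> Df y" by simp
  then show ?thesis by (simp add: g_def divide_inverse mult.commute)
qed

lemma cont_bound:
  fixes h :: "'a \<Rightarrow> real"
  assumes "continuous_on UNIV h"
  shows "\<exists>M. \<forall>x\<in>cball xs r. h x \<le> M"
proof (cases "r < 0")
  case True then show ?thesis by auto
next
  case False
  then have "cball xs r \<noteq> {}" by auto
  from continuous_attains_sup[OF compact_cball this continuous_on_subset[OF assms]]
  show ?thesis by blast
qed

lemma f_lip: "\<exists>L\<ge>0. \<forall>x\<in>cball xs r. \<bar>f x - f xs\<bar> \<le> L * norm (x - xs)"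
proof -
  define G where "G z = (\<Sum>b\<in>Basis. \<bar>frechet_derivative f (at z) b\<bar>)" for z
  have "continuous_on UNIV G" unfolding G_def
    by (intro continuous_intros f_part_cont) auto
  from cont_bound[OF this] obtain M where M: "\<And>z. z \<in> cball xs r \<Longrightarrow> G z \<le> M" by blast
  define L where "L = max M 0"
  have "\<bar>f x - f xs\<bar> \<le> L * norm (x - xs)" if x: "x \<in> cball xs r" for x
  proof -
    define h where "h = x - xs"
    define g where "g t = f (xs + t *\<^sub>R h)" for t
    define g' where "g' t = (\<Sum>b\<in>Basis. (h \<bullet> b) * frechet_derivative f (at (xs + t *\<^sub>R h)) b)" for t
    have "\<And>t. 0 \<le> t \<Longrightarrow> t \<le> 1 \<Longrightarrow> (g has_real_derivative g' t) (at t)"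
      unfolding g_def g'_def using deriv_line f_diff by blast
    from MVT2[OF zero_less_one this] obtain t where t: "0 < t" "t < 1" "g 1 - g 0 = (1 - 0) * g' t"
      by blast
    have inb: "xs + t *\<^sub>R h \<in> cball xs r"
    proof -
      have "norm (t *\<^sub>R h) \<le> norm h" using t by (simp add: mult_left_le_one_le)
      then show ?thesis using x by (simp add: h_def dist_norm norm_minus_commute)
    qed
    have "\<bar>g' t\<bar> \<le> (\<Sum>b\<in>Basis. \<bar>h \<bullet> b\<bar> * \<bar>frechet_derivative f (at (xs + t *\<^sub>R h)) b\<bar>)"
      unfolding g'_def by (rule order.trans[OF sum_abs]) (simp add: abs_mult)
    also have "\<dots> \<le> (\<Sum>b\<in>Basis. norm h * \<bar>frechet_derivative f (at (xs + t *\<^sub>R h)) b\<bar>)"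
      by (intro sum_mono mult_right_mono Basis_le_norm) auto
    also have "\<dots> = norm h * G (xs + t *\<^sub>R h)" by (simp add: G_def sum_distrib_left)
    also have "\<dots> \<le> norm h * L" using M[OF inb] by (intro mult_left_mono) (auto simp: L_def)
    finally show ?thesis using t by (simp add: g_def h_def mult.commute)
  qed
  moreover have "L \<ge> 0" by (simp add: L_def)
  ultimately show ?thesis by blast
qed

lemma pi0_bound: "\<exists>P. \<forall>x\<in>cball xs r. pi0 x \<le> P"
  using cont_bound[OF pi0_cont] .

end

lemma change_var:
  fixes g :: "'a::euclidean_space \<Rightarrow> real" and t :: 'a
  assumes c: "c \<noteq> 0" and g[measurable]: "g \<in> borel_measurable borel"
  shows "(\<integral>x. g x \<partial>lborel) = \<bar>c\<bar>^DIM('a) * (\<integral>y. g (t + c *\<^sub>R y) \<partial>lborel)"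
proof -
  let ?T = "\<lambda>x. t + c *\<^sub>R x"
  have T[measurable]: "?T \<in> borel_measurable borel" by simp
  have eq: "lborel = density (distr lborel borel ?T) (\<lambda>_. ennreal (\<bar>c\<bar>^DIM('a)))"
    by (rule lborel_affine[OF c])
  have "(\<integral>x. g x \<partial>lborel) = (\<integral>x. g x \<partial>(density (distr lborel borel ?T) (\<lambda>_. ennreal (\<bar>c\<bar>^DIM('a)))))"
    using arg_cong[OF eq, of "\<lambda>M. integral\<^sup>L M g"] .
  also have "\<dots> = (\<integral>x. \<bar>c\<bar>^DIM('a) *\<^sub>R g x \<partial>(distr lborel borel ?T))"
    by (rule integral_density) simp_all
  also have "\<dots> = (\<integral>y. \<bar>c\<bar>^DIM('a) *\<^sub>R g (?T y) \<partial>lborel)"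
    by (rule integral_distr) simp_all
  also have "\<dots> = \<bar>c\<bar>^DIM('a) * (\<integral>y. g (t + c *\<^sub>R y) \<partial>lborel)"
    by simp
  finally show ?thesis .
qed

lemma gauss1_int:
  assumes a: "a > 0"
  shows "integrable lborel (\<lambda>t::real. exp (- a * t\<^sup>2))"
proof -
  define \<sigma> where "\<sigma> = sqrt (1 / (2 * a))"
  have s2: "2 * \<sigma>\<^sup>2 = 1 / a" using a by (simp add: \<sigma>_def)
  have sp: "\<sigma> > 0" using a by (simp add: \<sigma>_def)
  define C where "C = sqrt (2 * pi * \<sigma>\<^sup>2)"
  have C: "C > 0" using sp by (simp add: C_def)
  have "exp (- a * t\<^sup>2) = C * normal_density 0 \<sigma> t" for t
  proof -
    have "-(t - 0)\<^sup>2/ (2 * \<sigma>\<^sup>2) = - a * t\<^sup>2" unfolding s2 by simp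
    then have "normal_density 0 \<sigma> t = 1 / C * exp (- a * t\<^sup>2)"
      unfolding normal_density_def C_def by simp
    then show ?thesis using C by simp
  qed
  then have eqf: "(\<lambda>t::real. exp (- a * t\<^sup>2)) = (\<lambda>t. C * normal_density 0 \<sigma> t)"
    by (rule ext)
  show ?thesis unfolding eqf by (rule integrable_mult_right) (use sp integrable_normal_density[of 0 \<sigma>] in simp)
qed
lemma gauss_int0:
  assumes a: "a > 0"
  shows "integrable lborel (\<lambda>y::'a::euclidean_space. exp (- a * (norm y)\<^sup>2))"
proof -
  have eq: "exp (- a * (norm y)\<^sup>2) = (\<Prod>b\<in>Basis. exp (- a * (y \<bullet> b)\<^sup>2))" for y :: 'a
  proof -
    have ii: "y \<bullet> y = (\<Sum>b\<in>Basis. (y \<bullet> b) * (y \<bullet> b))" by (rule euclidean_inner)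
    have "(norm y)\<^sup>2 = y \<bullet> y" by (rule power2_norm_eq_inner)
    also have "\<dots> = (\<Sum>b\<in>Basis. (y \<bullet> b) * (y \<bullet> b))" by (rule ii)
    also have "\<dots> = (\<Sum>b\<in>Basis. (y \<bullet> b)\<^sup>2)" by (simp add: power2_eq_square)
    finally have "(norm y)\<^sup>2 = (\<Sum>b\<in>Basis. (y \<bullet> b)\<^sup>2)" .
    then show ?thesis by (simp add: sum_distrib_left exp_sum)
  qed
  have fin: "(\<integral>\<^sup>+t. ennreal (exp (- a * t\<^sup>2)) \<partial>lborel) < \<infinity>"
    using gauss1_int[OF a] by (simp add: integrable_iff_bounded)
  have feq: "(\<lambda>y::'a. ennreal (norm (exp (- a * (norm y)\<^sup>2)))) = (\<lambda>y. \<Prod>b\<in>Basis. ennreal (exp (- a * (y \<bullet> b)\<^sup>2)))"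
  proof (rule ext)
    fix y :: 'a
    have "ennreal (norm (exp (- a * (norm y)\<^sup>2))) = ennreal (\<Prod>b\<in>Basis. exp (- a * (y \<bullet> b)\<^sup>2))"
      by (simp only: eq real_norm_def abs_exp_cancel) (simp add: abs_of_nonneg prod_nonneg)
    also have "\<dots> = (\<Prod>b\<in>Basis. ennreal (exp (- a * (y \<bullet> b)\<^sup>2)))"
      by (rule prod_ennreal[symmetric]) simp
    finally show "ennreal (norm (exp (- a * (norm y)\<^sup>2))) = (\<Prod>b\<in>Basis. ennreal (exp (- a * (y \<bullet> b)\<^sup>2)))" .
  qed
  have "(\<integral>\<^sup>+y. ennreal (norm (exp (- a * (norm y)\<^sup>2))) \<partial>(lborel::'a measure))
      = (\<integral>\<^sup>+y. (\<Prod>b\<in>Basis. ennreal (exp (- a * (y \<bullet> b)\<^sup>2))) \<partial>(lborel::'a measure))"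
    by (simp only: feq)
  also have "\<dots> = (\<Prod>b\<in>(Basis::'a set). (\<integral>\<^sup>+t. ennreal (exp (- a * t\<^sup>2)) \<partial>lborel))"
    by (rule nn_integral_lborel_prod) simp_all
  also have "\<dots> = (\<integral>\<^sup>+t. ennreal (exp (- a * t\<^sup>2)) \<partial>lborel) ^ DIM('a)"
    by (simp only: prod_constant)
  also have "\<dots> < \<infinity>" using fin by (simp add: power_less_top_ennreal)
  finally show ?thesis by (simp add: integrable_iff_bounded)
qed

lemma gauss_pt:
  fixes a s :: real
  assumes a: "a > 0" and s: "s \<ge> 0"
  shows "exp (- a * s) * (1 + s) \<le> (1 + 2/a) * exp (- (a/2) * s)"
proof -
  define E where "E = exp (- (a/2) * s)"
  have E0: "E \<ge> 0" by (simp add: E_def)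
  have E1: "E \<le> 1" using a s by (simp add: E_def)
  have "1 + a/2 * s \<le> exp (a/2 * s)" by (rule exp_ge_add_one_self)
  then have "s \<le> 2/a * exp (a/2 * s)" using a by (simp add: field_simps)
  then have "s * E \<le> 2/a * exp (a/2 * s) * E" using E0 by (rule mult_right_mono)
  also have "2/a * exp (a/2 * s) * E = 2/a" by (simp add: E_def flip: exp_add)
  finally have sE: "s * E \<le> 2/a" .
  have EE: "E * E \<le> E" using E0 E1 by (simp add: mult_left_le_one_le)
  have sEE: "s * E * E \<le> 2/a * E" using sE E0 by (rule mult_right_mono)
  have ex: "exp (- a * s) = E * E"
    by (simp add: E_def flip: exp_add)
  have "exp (- a * s) * (1 + s) = E * E + s * E * E" unfolding ex by (simp add: algebra_simps)
  also have "\<dots> \<le> E + 2/a * E" using EE sEE by linarith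
  also have "\<dots> = (1 + 2/a) * exp (- (a/2) * s)" by (simp add: E_def algebra_simps)
  finally show ?thesis .
qed

lemma gauss_int:
  assumes a: "a > 0"
  shows "integrable lborel (\<lambda>y::'a::euclidean_space. exp (- a * (norm y)\<^sup>2) * (1 + (norm y)\<^sup>2))"
proof -
  have i: "integrable lborel (\<lambda>y::'a. exp (- (a/2) * (norm y)\<^sup>2))"
    by (rule gauss_int0) (use a in simp)
  have i2: "integrable lborel (\<lambda>y::'a. (1 + 2 / a) * exp (- (a/2) * (norm y)\<^sup>2))"
    using i by (rule integrable_mult_right)
  show ?thesis
  proof (rule Bochner_Integration.integrable_bound[OF i2])
    show "(\<lambda>y::'a. exp (- a * (norm y)\<^sup>2) * (1 + (norm y)\<^sup>2)) \<in> borel_measurable lborel"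
      by measurable
    have pt: "norm (exp (- a * (norm y)\<^sup>2) * (1 + (norm y)\<^sup>2))
       \<le> norm ((1 + 2 / a) * exp (- (a/2) * (norm y)\<^sup>2))" for y :: 'a
    proof -
      have "exp (- a * (norm y)\<^sup>2) * (1 + (norm y)\<^sup>2) \<le> (1 + 2/a) * exp (- (a/2) * (norm y)\<^sup>2)"
        using gauss_pt[OF a, of "(norm y)\<^sup>2"] by simp
      moreover have "exp (- a * (norm y)\<^sup>2) * (1 + (norm y)\<^sup>2) \<ge> 0" by simp
      ultimately show ?thesis by simp
    qed
    show "AE y in (lborel::'a measure). norm (exp (- a * (norm y)\<^sup>2) * (1 + (norm y)\<^sup>2))
       \<le> norm ((1 + 2 / a) * exp (- (a/2) * (norm y)\<^sup>2))"
      using pt by (intro AE_I2) blast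
  qed
qed

context lap begin

lemma pi0_meas[measurable]: "pi0 \<in> borel_measurable borel"
  by (rule borel_measurable_continuous_onI[OF pi0_cont])

lemma f_cont: "continuous_on UNIV f"
  using Ck_cont[OF f_C4] .

lemma f_meas[measurable]: "f \<in> borel_measurable borel"
  by (rule borel_measurable_continuous_onI[OF f_cont])

lemmas Phi_meas'[measurable] = Phi_meas

lemma psi_meas[measurable]: "psi \<in> borel_measurable borel"
  unfolding psi_def[abs_def] by measurable

lemma pi0_zero: "\<not> pi0 x > 0 \<Longrightarrow> pi0 x = 0"
  using pi0_nonneg[of x] by simp

lemma base_int:
  assumes k: "k \<ge> 1" and i: "i \<le> 2"
  shows "integrable lborel (\<lambda>x. pi0 x * exp (- real k * \<Phi> x) * (f x)^i)"
proof -
  have g: "(\<lambda>x. (f x)^i * pi0 x) \<in> {pi0, (\<lambda>x. f x * pi0 x), (\<lambda>x. (f x)\<^sup>2 * pi0 x)}"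
    using i by (auto simp: le_Suc_eq numeral_2_eq_2)
  have "set_integrable lborel {x. pi0 x > 0} (\<lambda>x. (f x)^i * pi0 x * exp (- real k * \<Phi> x))"
    using fin[OF k g] .
  then have I: "integrable lborel (\<lambda>x. indicator {x. pi0 x > 0} x *\<^sub>R ((f x)^i * pi0 x * exp (- real k * \<Phi> x)))"
    by (simp only: set_integrable_def)
  have eqf: "(\<lambda>x. indicator {x. pi0 x > 0} x *\<^sub>R ((f x)^i * pi0 x * exp (- real k * \<Phi> x)))
      = (\<lambda>x. pi0 x * exp (- real k * \<Phi> x) * (f x)^i)"
  proof (rule ext)
    fix x
    show "indicator {x. pi0 x > 0} x *\<^sub>R ((f x)^i * pi0 x * exp (- real k * \<Phi> x))
      = pi0 x * exp (- real k * \<Phi> x) * (f x)^i"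
      using pi0_zero[of x] by (cases "pi0 x > 0") (auto simp: indicator_def)
  qed
  from I[unfolded eqf] show ?thesis .
qed

lemma exp_psi: "exp (- k * psi x) = exp (k * \<Phi> xs) * exp (- k * \<Phi> x)"
proof -
  have "- k * psi x = k * \<Phi> xs + - k * \<Phi> x" by (simp add: psi_def algebra_simps)
  show ?thesis unfolding \<open>- k * psi x = k * \<Phi> xs + - k * \<Phi> x\<close> by (rule exp_add)
qed

lemma exp_psi': "exp (- (k * psi x)) = exp (k * \<Phi> xs) * exp (- (k * \<Phi> x))"
  using exp_psi[of k x] by simp

definition "Fk k j x = pi0 x * exp (- real k * psi x) * (f x - f xs)^j"

lemma Fk_int:
  assumes k: "k \<ge> 1" and j: "j \<le> 2"
  shows "integrable lborel (Fk k j)"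
proof -
  define E where "E i x = pi0 x * exp (- real k * \<Phi> x) * (f x)^i" for i x
  have EI: "integrable lborel (E i)" if "i \<le> 2" for i
    unfolding E_def[abs_def] using base_int[OF k that] .
  define c where "c = exp (real k * \<Phi> xs)"
  have "j = 0 \<or> j = 1 \<or> j = 2" using j by auto
  then show ?thesis
  proof (elim disjE)
    assume "j = 0"
    have eq: "Fk k j = (\<lambda>x. c * E 0 x)"
      using \<open>j = 0\<close> by (simp add: fun_eq_iff Fk_def E_def c_def exp_psi exp_psi')
    show ?thesis unfolding eq using EI[of 0] EI[of 1] EI[of 2] by simp
  next
    assume "j = 1"
    have eq: "Fk k j = (\<lambda>x. c * (E 1 x - f xs * E 0 x))"
      using \<open>j = 1\<close> by (simp add: fun_eq_iff Fk_def E_def c_def exp_psi exp_psi' algebra_simps)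
    show ?thesis unfolding eq using EI[of 0] EI[of 1] EI[of 2] by simp
  next
    assume "j = 2"
    have eq: "Fk k j = (\<lambda>x. c * (E 2 x - 2 * f xs * E 1 x + (f xs)^2 * E 0 x))"
      using \<open>j = 2\<close> by (simp add: fun_eq_iff Fk_def E_def c_def exp_psi exp_psi' algebra_simps power2_eq_square)
    show ?thesis unfolding eq using EI[of 0] EI[of 1] EI[of 2] by simp
  qed
qed

end

lemma tail0:
  fixes \<delta> C p :: real
  assumes "\<delta> > 0"
  shows "(\<lambda>n::nat. real n powr p * (C * exp (- real n * \<delta>))) \<longlonglongrightarrow> 0"
  using assms by real_asymp

lemma scal:
  fixes x :: real
  assumes x: "x > 0"
  shows "x powr (real d / 2 + real j / 2) * \<bar>inverse (sqrt x)\<bar> ^ d = sqrt x ^ j"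
proof -
  have sq: "sqrt x ^ k = x powr (real k / 2)" for k
  proof -
    have "sqrt x ^ k = (x powr (1/2)) ^ k" using x by (simp add: powr_half_sqrt)
    also have "\<dots> = x powr (real k * (1/2))" using x by (simp add: powr_power)
    finally show ?thesis by simp
  qed
  have "\<bar>inverse (sqrt x)\<bar> ^ d = inverse (sqrt x ^ d)" using x by (simp add: power_inverse)
  also have "\<dots> = x powr (- (real d / 2))" by (simp add: sq powr_minus)
  finally have "x powr (real d / 2 + real j / 2) * \<bar>inverse (sqrt x)\<bar> ^ d
      = x powr (real d / 2 + real j / 2) * x powr (- (real d / 2))" by simp
  also have "\<dots> = x powr (real j / 2)" by (simp flip: powr_add)
  also have "\<dots> = sqrt x ^ j" by (simp add: sq)
  finally show ?thesis .
qed

lemma poly_bound: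
  fixes L t :: real
  assumes "L \<ge> 0" "t \<ge> 0" "j \<le> 2"
  shows "(L * t) ^ j \<le> (1 + L\<^sup>2) * (1 + t\<^sup>2)"
proof -
  have A: "(1 + L\<^sup>2) * (1 + t\<^sup>2) = 1 + L\<^sup>2 + t\<^sup>2 + L\<^sup>2 * t\<^sup>2" by (simp add: algebra_simps)
  have B: "2 * (L * t) \<le> L\<^sup>2 + t\<^sup>2" using sum_squares_bound[of L t] by (simp add: algebra_simps)
  have C: "L\<^sup>2 \<ge> 0" "t\<^sup>2 \<ge> 0" "L\<^sup>2 * t\<^sup>2 \<ge> 0" "L * t \<ge> 0" using assms by auto
  have "j = 0 \<or> j = 1 \<or> j = 2" using assms by auto
  then show ?thesis
  proof (elim disjE)
    assume "j = 0" then have "(L * t) ^ j = 1" by simp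
    then show ?thesis using A C by linarith
  next
    assume "j = 1" then have "(L * t) ^ j = L * t" by simp
    then show ?thesis using A B C by linarith
  next
    assume "j = 2" then have "(L * t) ^ j = L\<^sup>2 * t\<^sup>2" by (simp add: power_mult_distrib)
    then show ?thesis using A C by linarith
  qed
qed

context lap begin

lemma Df_bl: "bounded_linear Df"
  unfolding Df_def using f_diff frechet_derivative_works has_derivative_bounded_linear by blast

lemma Df_meas[measurable]: "Df \<in> borel_measurable borel"
  by (rule borel_measurable_continuous_onI[OF linear_continuous_on[OF Df_bl]])

lemma Qxs_meas[measurable]: "Q xs \<in> borel_measurable borel"
  by (rule borel_measurable_continuous_onI[OF Q_cont])

lemma Fk_meas[measurable]: "Fk k j \<in> borel_measurable borel"
  unfolding Fk_def[abs_def] by measurable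

definition "LL (m::nat) (j::nat) = (\<integral>y. pi0 xs * exp (- real m * (Q xs y / 2)) * (Df y)^j \<partial>lborel)"

end

context lap begin

lemma laplace:
  assumes m: "m \<ge> 1" and j: "j \<le> 2"
  shows "(\<lambda>n. real n powr (real DIM('a) / 2 + real j / 2) * (\<integral>x. Fk (m * n) j x \<partial>lborel)) \<longlonglongrightarrow> LL m j"
    and "integrable lborel (\<lambda>y. pi0 xs * exp (- real m * (Q xs y / 2)) * (Df y)^j)"
proof -
  obtain r \<kappa> where r: "r > 0" "\<kappa> > 0" "cball xs r \<subseteq> UU" "cball xs r \<subseteq> {x. pi0 x > 0}"
    "\<And>x. x \<in> cball xs r \<Longrightarrow> psi x \<ge> \<kappa> * (norm (x - xs))\<^sup>2"
    using lower_bound by blast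
  obtain Lf where Lf: "Lf \<ge> 0" "\<And>x. x \<in> cball xs r \<Longrightarrow> \<bar>f x - f xs\<bar> \<le> Lf * norm (x - xs)"
    using f_lip[of r] by blast
  obtain P where P: "\<And>x. x \<in> cball xs r \<Longrightarrow> pi0 x \<le> P"
    using pi0_bound[of r] by blast
  have P0: "P \<ge> 0" using P[of xs] pi0_nonneg[of xs] r(1) by simp
  obtain \<delta> where \<delta>: "\<delta> > 0" "\<And>x. pi0 x > 0 \<Longrightarrow> dist x xs > r/2 \<Longrightarrow> \<Phi> x - \<Phi> xs \<ge> \<delta>"
    using sep[of "r/2"] r(1) by auto
  define B where "B = ball xs r"
  have B_sub: "B \<subseteq> cball xs r" by (auto simp: B_def)
  have B_meas[measurable]: "B \<in> sets borel" by (simp add: B_def)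
  define p where "p = real DIM('a) / 2 + real j / 2"
  define cn where "cn n = inverse (sqrt (real n))" for n :: nat
  define s where "s n y = indicator B (xs + cn n *\<^sub>R y) * pi0 (xs + cn n *\<^sub>R y) *
      exp (- real m * (real n * psi (xs + cn n *\<^sub>R y))) *
      (sqrt (real n) * (f (xs + cn n *\<^sub>R y) - f xs)) ^ j" for n y
  define lim where "lim y = pi0 xs * exp (- real m * (Q xs y / 2)) * (Df y)^j" for y
  define w where "w y = P * (1 + Lf\<^sup>2) * (exp (- \<kappa> * (norm y)\<^sup>2) * (1 + (norm y)\<^sup>2))" for y :: 'a
  define F where "F n = Fk (m * n) j" for n
  have Fint: "integrable lborel (F n)" if "n \<ge> 1" for n
    unfolding F_def using that m j by (intro Fk_int) (auto simp: Suc_le_eq)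
  have Fmeas[measurable]: "F n \<in> borel_measurable borel" for n unfolding F_def by measurable

  have inside: "real n powr p * (\<integral>x. indicator B x * F n x \<partial>lborel) = (\<integral>y. s n y \<partial>lborel)"
    if n: "n \<ge> 1" for n
  proof -
    have cn0: "cn n \<noteq> 0" using n by (simp add: cn_def)
    have "(\<integral>x. indicator B x * F n x \<partial>lborel)
        = \<bar>cn n\<bar>^DIM('a) * (\<integral>y. indicator B (xs + cn n *\<^sub>R y) * F n (xs + cn n *\<^sub>R y) \<partial>lborel)"
      by (rule change_var[OF cn0]) measurable
    then have "real n powr p * (\<integral>x. indicator B x * F n x \<partial>lborel)
        = (real n powr p * \<bar>cn n\<bar>^DIM('a)) * (\<integral>y. indicator B (xs + cn n *\<^sub>R y) * F n (xs + cn n *\<^sub>R y) \<partial>lborel)"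
      by simp
    also have "real n powr p * \<bar>cn n\<bar>^DIM('a) = sqrt (real n) ^ j"
      unfolding p_def cn_def using n by (intro scal) simp
    also have "sqrt (real n) ^ j * (\<integral>y. indicator B (xs + cn n *\<^sub>R y) * F n (xs + cn n *\<^sub>R y) \<partial>lborel)
        = (\<integral>y. sqrt (real n) ^ j * (indicator B (xs + cn n *\<^sub>R y) * F n (xs + cn n *\<^sub>R y)) \<partial>lborel)"
      by simp
    also have "\<dots> = (\<integral>y. s n y \<partial>lborel)"
    proof (rule Bochner_Integration.integral_cong[OF refl])
      fix y
      show "sqrt (real n) ^ j * (indicator B (xs + cn n *\<^sub>R y) * F n (xs + cn n *\<^sub>R y)) = s n y"
      proof -
        let ?z = "xs + cn n *\<^sub>R y"
        have e1: "sqrt (real n) ^ j * (f ?z - f xs)^j = (sqrt (real n) * (f ?z - f xs))^j"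
          by (simp only: power_mult_distrib)
        have e2: "exp (- real (m*n) * psi ?z) = exp (- real m * (real n * psi ?z))"
          by (simp add: algebra_simps)
        show ?thesis unfolding s_def F_def Fk_def e2 e1[symmetric] by (simp only: mult_ac)
      qed
    qed
    finally show ?thesis .
  qed

  have c0: "(\<lambda>n. cn n) \<longlonglongrightarrow> 0" unfolding cn_def by real_asymp
  have lim_pt: "(\<lambda>n. s n y) \<longlonglongrightarrow> lim y" for y
  proof -
    have "(\<lambda>n. xs + cn n *\<^sub>R y) \<longlonglongrightarrow> xs + 0 *\<^sub>R y"
      by (intro tendsto_add tendsto_const tendsto_scaleR c0)
    then have z0: "(\<lambda>n. xs + cn n *\<^sub>R y) \<longlonglongrightarrow> xs" by simp
    have "open B" "xs \<in> B" using r(1) by (auto simp: B_def)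
    from topological_tendstoD[OF z0 this]
    have "eventually (\<lambda>n. indicator B (xs + cn n *\<^sub>R y) = (1::real)) sequentially"
      by eventually_elim (simp add: indicator_def)
    then have i1: "(\<lambda>n. indicator B (xs + cn n *\<^sub>R y)) \<longlonglongrightarrow> (1::real)"
      by (rule tendsto_eventually)
    have "isCont pi0 xs" using pi0_cont continuous_on_eq_continuous_at[OF open_UNIV] by blast
    from isCont_tendsto_compose[OF this z0]
    have i2: "(\<lambda>n. pi0 (xs + cn n *\<^sub>R y)) \<longlonglongrightarrow> pi0 xs" .
    have i3: "(\<lambda>n. real n * psi (xs + cn n *\<^sub>R y)) \<longlonglongrightarrow> Q xs y / 2"
      using psi_limit[of y] unfolding cn_def .
    have i4: "(\<lambda>n. sqrt (real n) * (f (xs + cn n *\<^sub>R y) - f xs)) \<longlonglongrightarrow> Df y"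
      using f_limit[of y] unfolding cn_def .
    have "(\<lambda>n. s n y) \<longlonglongrightarrow> 1 * pi0 xs * exp (- real m * (Q xs y / 2)) * (Df y)^j"
      unfolding s_def by (intro tendsto_intros i1 i2 i3 i4)
    then show ?thesis by (simp add: lim_def)
  qed

  have w0: "w y \<ge> 0" for y using P0 by (simp add: w_def)
  have bnd: "\<bar>s n y\<bar> \<le> w y" if n: "n \<ge> 1" for n y
  proof (cases "xs + cn n *\<^sub>R y \<in> B")
    case False
    then show ?thesis using w0[of y] by (simp add: s_def)
  next
    case True
    define z where "z = xs + cn n *\<^sub>R y"
    have zc: "z \<in> cball xs r" using True B_sub by (auto simp: z_def)
    have cpos: "cn n > 0" using n by (simp add: cn_def)
    have nz: "norm (z - xs) = cn n * norm y" using cpos by (simp add: z_def)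
    have ncn: "real n * (cn n)\<^sup>2 = 1" using n by (simp add: cn_def power_inverse)
    have scn: "sqrt (real n) * cn n = 1" using n by (simp add: cn_def)
    have "psi z \<ge> \<kappa> * (cn n * norm y)\<^sup>2" using r(5)[OF zc] nz by simp
    then have "real n * psi z \<ge> real n * (\<kappa> * (cn n * norm y)\<^sup>2)"
      by (intro mult_left_mono) auto
    also have "real n * (\<kappa> * (cn n * norm y)\<^sup>2) = \<kappa> * (norm y)\<^sup>2 * (real n * (cn n)\<^sup>2)"
      by (simp add: power_mult_distrib algebra_simps)
    finally have ps: "real n * psi z \<ge> \<kappa> * (norm y)\<^sup>2" using ncn by simp
    have "\<kappa> * (norm y)\<^sup>2 \<ge> 0" using r(2) by simp
    then have "real m * (real n * psi z) \<ge> 1 * (real n * psi z)"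
      using ps m by (intro mult_right_mono) auto
    then have "- real m * (real n * psi z) \<le> - \<kappa> * (norm y)\<^sup>2" using ps by simp
    then have e: "exp (- real m * (real n * psi z)) \<le> exp (- \<kappa> * (norm y)\<^sup>2)" by simp
    have "\<bar>sqrt (real n) * (f z - f xs)\<bar> = sqrt (real n) * \<bar>f z - f xs\<bar>" by (simp add: abs_mult)
    also have "\<dots> \<le> sqrt (real n) * (Lf * (cn n * norm y))"
      using Lf(2)[OF zc] nz by (intro mult_left_mono) auto
    also have "\<dots> = Lf * norm y * (sqrt (real n) * cn n)" by (simp add: algebra_simps)
    finally have fz: "\<bar>sqrt (real n) * (f z - f xs)\<bar> \<le> Lf * norm y" using scn by simp
    have "\<bar>sqrt (real n) * (f z - f xs)\<bar> ^ j \<le> (Lf * norm y) ^ j"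
      by (rule power_mono[OF fz]) simp
    also have "\<dots> \<le> (1 + Lf\<^sup>2) * (1 + (norm y)\<^sup>2)" by (rule poly_bound) (use Lf(1) j in auto)
    finally have pw: "\<bar>sqrt (real n) * (f z - f xs)\<bar> ^ j \<le> (1 + Lf\<^sup>2) * (1 + (norm y)\<^sup>2)" .
    have pz: "0 \<le> pi0 z" "pi0 z \<le> P" using pi0_nonneg P[OF zc] by auto
    have "\<bar>s n y\<bar> = pi0 z * exp (- real m * (real n * psi z)) * \<bar>sqrt (real n) * (f z - f xs)\<bar> ^ j"
      using True pz by (simp add: s_def z_def[symmetric] abs_mult power_abs)
    also have "\<dots> \<le> P * exp (- \<kappa> * (norm y)\<^sup>2) * ((1 + Lf\<^sup>2) * (1 + (norm y)\<^sup>2))"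
      using pz e pw P0 by (intro mult_mono) auto
    also have "\<dots> = w y" by (simp add: w_def algebra_simps)
    finally show ?thesis .
  qed

  have w_int: "integrable lborel w"
    unfolding w_def using gauss_int[OF r(2)] by (rule integrable_mult_right)
  have s_meas[measurable]: "s n \<in> borel_measurable borel" for n
    unfolding s_def cn_def[abs_def] by measurable
  have lim_meas[measurable]: "lim \<in> borel_measurable borel"
    unfolding lim_def[abs_def] by measurable
  have lim_suc: "(\<lambda>n. s (Suc n) y) \<longlonglongrightarrow> lim y" for y
    using lim_pt[of y] filterlim_sequentially_Suc[of "\<lambda>n. s n y"] by simp
  have ae1: "AE y in lborel. (\<lambda>n. s (Suc n) y) \<longlonglongrightarrow> lim y"
    using lim_suc by (intro AE_I2) blast
  have ae2: "AE y in lborel. norm (s (Suc n) y) \<le> w y" for n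
    using bnd[of "Suc n"] by (intro AE_I2) simp
  have dct_int: "integrable lborel lim"
    by (rule integrable_dominated_convergence[where s="\<lambda>n. s (Suc n)" and w=w, OF _ _ w_int ae1 ae2])
       measurable
  have dct: "(\<lambda>n. \<integral>y. s (Suc n) y \<partial>lborel) \<longlonglongrightarrow> (\<integral>y. lim y \<partial>lborel)"
    by (rule integral_dominated_convergence[where s="\<lambda>n. s (Suc n)" and w=w, OF _ _ w_int ae1 ae2])
       measurable
  then have T1: "(\<lambda>n. \<integral>y. s n y \<partial>lborel) \<longlonglongrightarrow> (\<integral>y. lim y \<partial>lborel)"
    using filterlim_sequentially_Suc[of "\<lambda>n. \<integral>y. s n y \<partial>lborel"] by simp

  define I1 where "I1 = (\<integral>x. \<bar>Fk 1 j x\<bar> \<partial>lborel)"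
  have Fk1: "integrable lborel (\<lambda>x. \<bar>Fk 1 j x\<bar>)" using Fk_int[of 1 j] j by simp
  have Bl: "B \<in> sets lborel" by (simp add: B_def)
  have indF: "integrable lborel (\<lambda>x. indicator B x * F n x)" if "n \<ge> 1" for n
    using integrable_mult_indicator[OF Bl Fint[OF that]] by simp
  have outpt: "\<bar>F n x - indicator B x * F n x\<bar> \<le> exp (- (real n - 1) * \<delta>) * \<bar>Fk 1 j x\<bar>"
    if n: "n \<ge> 1" for n x
  proof (cases "x \<in> B")
    case True then show ?thesis by simp
  next
    case xB: False
    show ?thesis
    proof (cases "pi0 x > 0")
      case False
      then have "pi0 x = 0" by (rule pi0_zero)
      then show ?thesis using xB by (simp add: F_def Fk_def)
    next
      case True
      have "dist x xs \<ge> r" using xB by (simp add: B_def dist_commute)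
      then have "dist x xs > r/2" using r(1) by linarith
      then have pd: "psi x \<ge> \<delta>" using \<delta>(2)[OF True] by (simp add: psi_def)
      have "1 * n \<le> m * n" using m by (rule mult_le_mono1)
      then have mn: "real (m * n) \<ge> real n" by (simp only: of_nat_le_iff mult_1)
      have "(real (m * n) - 1) * psi x \<ge> (real n - 1) * psi x"
        using mn pd \<delta>(1) by (intro mult_right_mono) auto
      moreover have "(real n - 1) * psi x \<ge> (real n - 1) * \<delta>"
        using pd n by (intro mult_left_mono) auto
      ultimately have "- real (m * n) * psi x \<le> - (real n - 1) * \<delta> + - real 1 * psi x"
        by (simp add: algebra_simps)
      then have ex: "exp (- real (m * n) * psi x) \<le> exp (- (real n - 1) * \<delta>) * exp (- real 1 * psi x)"
        by (simp flip: exp_add)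
      have A0: "0 \<le> pi0 x * \<bar>f x - f xs\<bar> ^ j" using pi0_nonneg[of x] by simp
      have "\<bar>F n x - indicator B x * F n x\<bar> = pi0 x * \<bar>f x - f xs\<bar> ^ j * exp (- real (m * n) * psi x)"
        using xB pi0_nonneg[of x] by (simp add: F_def Fk_def abs_mult power_abs)
      also have "\<dots> \<le> pi0 x * \<bar>f x - f xs\<bar> ^ j * (exp (- (real n - 1) * \<delta>) * exp (- real 1 * psi x))"
        using ex A0 by (rule mult_left_mono)
      also have "\<dots> = exp (- (real n - 1) * \<delta>) * \<bar>Fk 1 j x\<bar>"
        using pi0_nonneg[of x] by (simp add: Fk_def abs_mult power_abs)
      finally show ?thesis .
    qed
  qed
  have outb: "\<bar>\<integral>x. F n x - indicator B x * F n x \<partial>lborel\<bar> \<le> exp (- (real n - 1) * \<delta>) * I1"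
    if n: "n \<ge> 1" for n
  proof -
    have "\<bar>\<integral>x. F n x - indicator B x * F n x \<partial>lborel\<bar> \<le> (\<integral>x. exp (- (real n - 1) * \<delta>) * \<bar>Fk 1 j x\<bar> \<partial>lborel)"
      by (rule integral_abs_bound_integral) (use Fint[OF n] indF[OF n] Fk1 outpt[OF n] in auto)
    also have "\<dots> = exp (- (real n - 1) * \<delta>) * I1" by (simp add: I1_def)
    finally show ?thesis .
  qed
  have T2: "(\<lambda>n. real n powr p * (\<integral>x. F n x - indicator B x * F n x \<partial>lborel)) \<longlonglongrightarrow> 0"
  proof (rule Lim_null_comparison)
    show "eventually (\<lambda>n. norm (real n powr p * (\<integral>x. F n x - indicator B x * F n x \<partial>lborel))
        \<le> real n powr p * ((exp \<delta> * I1) * exp (- real n * \<delta>))) sequentially"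
      using eventually_ge_at_top[of "1::nat"]
    proof eventually_elim
      case (elim n)
      have "norm (real n powr p * (\<integral>x. F n x - indicator B x * F n x \<partial>lborel))
          = real n powr p * \<bar>\<integral>x. F n x - indicator B x * F n x \<partial>lborel\<bar>" by (simp add: abs_mult)
      also have "\<dots> \<le> real n powr p * (exp (- (real n - 1) * \<delta>) * I1)"
        using outb[OF elim] by (intro mult_left_mono) auto
      also have "exp (- (real n - 1) * \<delta>) = exp \<delta> * exp (- real n * \<delta>)"
        by (simp add: algebra_simps flip: exp_add)
      finally show ?case by (simp add: algebra_simps)
    qed
    show "(\<lambda>n. real n powr p * ((exp \<delta> * I1) * exp (- real n * \<delta>))) \<longlonglongrightarrow> 0"
      by (rule tail0) (rule \<delta>(1))
  qed

  have split: "real n powr p * (\<integral>x. F n x \<partial>lborel)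
      = (\<integral>y. s n y \<partial>lborel) + real n powr p * (\<integral>x. F n x - indicator B x * F n x \<partial>lborel)"
    if n: "n \<ge> 1" for n
  proof -
    have e1: "(\<integral>x. F n x - indicator B x * F n x \<partial>lborel) = (\<integral>x. F n x \<partial>lborel) - (\<integral>x. indicator B x * F n x \<partial>lborel)"
      by (rule Bochner_Integration.integral_diff[OF Fint[OF n] indF[OF n]])
    show ?thesis unfolding e1 inside[OF n, symmetric] by (simp only: right_diff_distrib)
  qed
  have "(\<lambda>n. (\<integral>y. s n y \<partial>lborel) + real n powr p * (\<integral>x. F n x - indicator B x * F n x \<partial>lborel))
      \<longlonglongrightarrow> (\<integral>y. lim y \<partial>lborel)"
    using tendsto_add[OF T1 T2] by simp
  then have "(\<lambda>n. real n powr p * (\<integral>x. F n x \<partial>lborel)) \<longlonglongrightarrow> (\<integral>y. lim y \<partial>lborel)"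
  proof (rule Lim_transform_eventually)
    show "eventually (\<lambda>n. (\<integral>y. s n y \<partial>lborel) + real n powr p * (\<integral>x. F n x - indicator B x * F n x \<partial>lborel)
        = real n powr p * (\<integral>x. F n x \<partial>lborel)) sequentially"
      using eventually_ge_at_top[of "1::nat"] by eventually_elim (simp add: split)
  qed
  then show "(\<lambda>n. real n powr (real DIM('a) / 2 + real j / 2) * (\<integral>x. Fk (m * n) j x \<partial>lborel)) \<longlonglongrightarrow> LL m j"
    by (simp add: p_def F_def LL_def lim_def)
  show "integrable lborel (\<lambda>y. pi0 xs * exp (- real m * (Q xs y / 2)) * (Df y)^j)"
    using dct_int by (simp add: lim_def[abs_def])
qed

end

lemma AE_ball:
  fixes v :: "'a::euclidean_space"
  assumes ae: "AE y in lborel. P y" and e: "e > 0"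
  shows "\<exists>y\<in>ball v e. P y"
proof (rule ccontr)
  assume "\<not> (\<exists>y\<in>ball v e. P y)"
  then have sub: "ball v e \<subseteq> {y \<in> space lborel. \<not> P y}" by auto
  from ae obtain N where N: "{y \<in> space lborel. \<not> P y} \<subseteq> N" "emeasure lborel N = 0" "N \<in> sets lborel"
    by (rule AE_E)
  have "emeasure lborel (ball v e) \<le> emeasure lborel N"
    using sub N(1,3) by (intro emeasure_mono) auto
  then have "emeasure lborel (ball v e) = 0" using N(2) by simp
  then have "measure lborel (ball v e) = 0" by (simp add: measure_def)
  moreover have "measure lborel (ball v e) > 0" using content_ball_pos[OF e, of v] by simp
  ultimately show False by simp
qed

lemma int_pos:
  fixes g :: "'a::euclidean_space \<Rightarrow> real"
  assumes int: "integrable lborel g" and nn: "\<And>y. g y \<ge> 0"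
    and e: "e > 0" and pos: "\<And>y. y \<in> ball v e \<Longrightarrow> g y > 0"
  shows "(\<integral>y. g y \<partial>lborel) > 0"
proof -
  have ge: "(\<integral>y. g y \<partial>lborel) \<ge> 0" using nn by (simp add: integral_nonneg)
  have "(\<integral>y. g y \<partial>lborel) \<noteq> 0"
  proof
    assume "(\<integral>y. g y \<partial>lborel) = 0"
    then have "AE y in lborel. g y = 0"
      using integral_nonneg_eq_0_iff_AE[OF int] nn by simp
    from AE_ball[OF this e, of v] obtain y where "y \<in> ball v e" "g y = 0" by blast
    with pos show False by force
  qed
  with ge show ?thesis by simp
qed

context lap begin

lemma Df_neg: "Df (- y) = - Df y"
proof -
  interpret L: bounded_linear Df by (rule Df_bl)
  show ?thesis using L.scaleR[of "-1" y] by simp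
qed

lemma LL1: "LL m 1 = 0"
proof -
  define g where "g y = pi0 xs * exp (- real m * (Q xs y / 2)) * (Df y)^1" for y
  have gm[measurable]: "g \<in> borel_measurable borel" unfolding g_def[abs_def] by measurable
  have "(\<integral>y. g y \<partial>lborel) = \<bar>-1::real\<bar>^DIM('a) * (\<integral>y. g (0 + (-1::real) *\<^sub>R y) \<partial>lborel)"
    by (rule change_var) (auto simp: gm)
  also have "\<dots> = (\<integral>y. - g y \<partial>lborel)"
    by (simp add: g_def Q_neg Df_neg)
  also have "\<dots> = - (\<integral>y. g y \<partial>lborel)" by simp
  finally have "(\<integral>y. g y \<partial>lborel) = 0" by simp
  then show ?thesis by (simp add: LL_def g_def[abs_def])
qed

lemma LL0: "m \<ge> 1 \<Longrightarrow> LL m 0 > 0"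
  unfolding LL_def
  by (rule int_pos[where e=1 and v=0]) (use laplace(2)[of m 0] pi0_xs_pos in auto)

lemma LL2: "m \<ge> 1 \<Longrightarrow> LL m 2 > 0"
proof -
  assume m: "m \<ge> 1"
  obtain v where v: "Df v \<noteq> 0" using grad unfolding Df_def by (auto simp: fun_eq_iff)
  have "open {y. Df y \<noteq> (\<lambda>_. 0) y}"
    by (rule open_Collect_neq) (auto intro: linear_continuous_on[OF Df_bl])
  then have "open {y. Df y \<noteq> 0}" by simp
  then obtain e where e: "e > 0" "ball v e \<subseteq> {y. Df y \<noteq> 0}"
    using v open_contains_ball by blast
  show ?thesis unfolding LL_def
    by (rule int_pos[where e=e and v=v]) (use laplace(2)[OF m, of 2] pi0_xs_pos e in auto)
qed

end

context lap begin

definition "J k j = (\<integral>x. Fk k j x \<partial>lborel)"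

lemma prior_int:
  assumes [measurable]: "g \<in> borel_measurable borel"
  shows "(\<integral>x. g x \<partial>prior pi0) = (\<integral>x. pi0 x * g x \<partial>lborel)"
  unfolding prior_def by (subst integral_density) (auto simp: pi0_nonneg)

lemma exp_Phi: "exp (- k * \<Phi> x) = exp (- k * \<Phi> xs) * exp (- k * psi x)"
proof -
  have "- k * \<Phi> x = - k * \<Phi> xs + - k * psi x" by (simp add: psi_def algebra_simps)
  show ?thesis unfolding \<open>- k * \<Phi> x = - k * \<Phi> xs + - k * psi x\<close> by (rule exp_add)
qed

lemma exp_Phi': "exp (- (k * \<Phi> x)) = exp (- (k * \<Phi> xs)) * exp (- (k * psi x))"
  using exp_Phi[of k x] by simp

lemma Zn_eq: "Zn pi0 \<Phi> n = exp (- real n * \<Phi> xs) * J n 0"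
proof -
  have "Zn pi0 \<Phi> n = (\<integral>x. pi0 x * exp (- real n * \<Phi> x) \<partial>lborel)"
    unfolding Zn_def by (rule prior_int) measurable
  also have "\<dots> = (\<integral>x. exp (- real n * \<Phi> xs) * Fk n 0 x \<partial>lborel)"
  proof (rule Bochner_Integration.integral_cong[OF refl])
    fix x
    show "pi0 x * exp (- real n * \<Phi> x) = exp (- real n * \<Phi> xs) * Fk n 0 x"
      unfolding Fk_def exp_Phi[of "real n" x] by simp
  qed
  also have "\<dots> = exp (- real n * \<Phi> xs) * J n 0" by (simp add: J_def)
  finally show ?thesis .
qed

lemma dens_eq:
  assumes "J n 0 > 0"
  shows "exp (- real n * \<Phi> x) / Zn pi0 \<Phi> n = exp (- real n * psi x) / J n 0"
  using assms unfolding Zn_eq exp_Phi[of "real n" x] by simp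

lemma post_int:
  assumes J0: "J n 0 > 0" and [measurable]: "g \<in> borel_measurable borel"
  shows "(\<integral>x. g x \<partial>post pi0 \<Phi> n) = (\<integral>x. pi0 x * exp (- real n * psi x) * g x \<partial>lborel) / J n 0"
proof -
  have Zp: "Zn pi0 \<Phi> n > 0" using J0 by (simp add: Zn_eq)
  have "(\<integral>x. g x \<partial>post pi0 \<Phi> n) = (\<integral>x. exp (- real n * \<Phi> x) / Zn pi0 \<Phi> n * g x \<partial>prior pi0)"
    unfolding post_def using Zp by (subst integral_density) (auto simp: prior_def)
  also have "\<dots> = (\<integral>x. pi0 x * (exp (- real n * \<Phi> x) / Zn pi0 \<Phi> n * g x) \<partial>lborel)"
    by (rule prior_int) measurable
  also have "\<dots> = (\<integral>x. pi0 x * exp (- real n * psi x) * g x / J n 0 \<partial>lborel)"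
  proof (rule Bochner_Integration.integral_cong[OF refl])
    fix x
    have "pi0 x * (exp (- real n * \<Phi> x) / Zn pi0 \<Phi> n * g x) = pi0 x * (exp (- real n * psi x) / J n 0 * g x)"
      by (simp only: dens_eq[OF J0])
    also have "pi0 x * (exp (- real n * psi x) / J n 0 * g x) = pi0 x * exp (- real n * psi x) * g x / J n 0"
      by (simp only: times_divide_eq_left times_divide_eq_right mult_ac)
    finally show "pi0 x * (exp (- real n * \<Phi> x) / Zn pi0 \<Phi> n * g x) = pi0 x * exp (- real n * psi x) * g x / J n 0" .
  qed
  also have "\<dots> = (\<integral>x. pi0 x * exp (- real n * psi x) * g x \<partial>lborel) / J n 0"
    by (rule integral_divide_zero)
  finally show ?thesis .
qed

end

context lap begin

lemma sets_prior[measurable_cong]: "sets (prior pi0) = sets borel"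
  by (simp add: prior_def)

lemma space_prior: "space (prior pi0) = UNIV"
  by (simp add: prior_def)

lemma J_int: "k \<ge> 1 \<Longrightarrow> j \<le> 2 \<Longrightarrow> integrable lborel (Fk k j)"
  by (rule Fk_int)

lemma G_lin:
  assumes k: "k \<ge> 1"
  shows "(\<integral>x. pi0 x * exp (- real k * psi x) * f x \<partial>lborel) = J k 1 + f xs * J k 0"
    and "(\<integral>x. pi0 x * exp (- real k * psi x) * (f x)\<^sup>2 \<partial>lborel) = J k 2 + 2 * f xs * J k 1 + (f xs)\<^sup>2 * J k 0"
    and "(\<integral>x. pi0 x * exp (- real k * psi x) * (f x - c)\<^sup>2 \<partial>lborel) = J k 2 - 2 * (c - f xs) * J k 1 + (c - f xs)\<^sup>2 * J k 0"
proof -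
  have I0: "integrable lborel (Fk k 0)" and I1: "integrable lborel (Fk k 1)" and I2: "integrable lborel (Fk k 2)"
    using Fk_int[OF k] by auto
  have I0': "integrable lborel (\<lambda>x. a * Fk k 0 x)" for a using I0 by simp
  have I1': "integrable lborel (\<lambda>x. a * Fk k 1 x)" for a using I1 by simp
  have "(\<integral>x. pi0 x * exp (- real k * psi x) * f x \<partial>lborel) = (\<integral>x. Fk k 1 x + f xs * Fk k 0 x \<partial>lborel)"
    by (rule Bochner_Integration.integral_cong[OF refl]) (simp add: Fk_def algebra_simps)
  also have "\<dots> = J k 1 + f xs * J k 0"
    by (subst Bochner_Integration.integral_add[OF I1 I0']) (simp add: J_def)
  finally show "(\<integral>x. pi0 x * exp (- real k * psi x) * f x \<partial>lborel) = J k 1 + f xs * J k 0" .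
  have "(\<integral>x. pi0 x * exp (- real k * psi x) * (f x)\<^sup>2 \<partial>lborel)
      = (\<integral>x. Fk k 2 x + (2 * f xs * Fk k 1 x + (f xs)\<^sup>2 * Fk k 0 x) \<partial>lborel)"
    by (rule Bochner_Integration.integral_cong[OF refl]) (simp add: Fk_def algebra_simps power2_eq_square)
  also have "\<dots> = J k 2 + (2 * f xs * J k 1 + (f xs)\<^sup>2 * J k 0)"
    by (subst Bochner_Integration.integral_add[OF I2 Bochner_Integration.integrable_add[OF I1' I0']],
        subst Bochner_Integration.integral_add[OF I1' I0']) (simp add: J_def)
  finally show "(\<integral>x. pi0 x * exp (- real k * psi x) * (f x)\<^sup>2 \<partial>lborel) = J k 2 + 2 * f xs * J k 1 + (f xs)\<^sup>2 * J k 0"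
    by simp
  have "(\<integral>x. pi0 x * exp (- real k * psi x) * (f x - c)\<^sup>2 \<partial>lborel)
      = (\<integral>x. Fk k 2 x + ((- 2 * (c - f xs)) * Fk k 1 x + (c - f xs)\<^sup>2 * Fk k 0 x) \<partial>lborel)"
    by (rule Bochner_Integration.integral_cong[OF refl]) (simp add: Fk_def algebra_simps power2_eq_square)
  also have "\<dots> = J k 2 + ((- 2 * (c - f xs)) * J k 1 + (c - f xs)\<^sup>2 * J k 0)"
    by (subst Bochner_Integration.integral_add[OF I2 Bochner_Integration.integrable_add[OF I1' I0']],
        subst Bochner_Integration.integral_add[OF I1' I0']) (simp add: J_def)
  finally show "(\<integral>x. pi0 x * exp (- real k * psi x) * (f x - c)\<^sup>2 \<partial>lborel) = J k 2 - 2 * (c - f xs) * J k 1 + (c - f xs)\<^sup>2 * J k 0"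
    by (simp add: algebra_simps)
qed

end

context lap begin

lemma moments:
  assumes n: "n \<ge> 1" and J0: "J n 0 > 0"
  shows "(\<integral>x. f x \<partial>post pi0 \<Phi> n) = (J n 1 + f xs * J n 0) / J n 0"
    and "var_meas (post pi0 \<Phi> n) f = J n 2 / J n 0 - (J n 1 / J n 0)\<^sup>2"
proof -
  show E: "(\<integral>x. f x \<partial>post pi0 \<Phi> n) = (J n 1 + f xs * J n 0) / J n 0"
    using post_int[OF J0, of f] G_lin(1)[OF n] by simp
  have E2: "(\<integral>x. (f x)\<^sup>2 \<partial>post pi0 \<Phi> n) = (J n 2 + 2 * f xs * J n 1 + (f xs)\<^sup>2 * J n 0) / J n 0"
    using post_int[OF J0, of "\<lambda>x. (f x)\<^sup>2"] G_lin(2)[OF n] by simp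
  show "var_meas (post pi0 \<Phi> n) f = J n 2 / J n 0 - (J n 1 / J n 0)\<^sup>2"
    unfolding var_meas_def E E2 using J0 by (simp add: field_simps power2_eq_square)
qed

lemma snis_eq:
  assumes n: "n \<ge> 1" and J0: "J n 0 > 0"
  defines "e \<equiv> J n 1 / J n 0"
  shows "snis_asym_var (post pi0 \<Phi> n) (prior pi0) f
     = (J (2*n) 2 - 2 * e * J (2*n) 1 + e\<^sup>2 * J (2*n) 0) / (J n 0)\<^sup>2"
proof -
  interpret P: prob_space "prior pi0" by (rule prob)
  define E where "E = (\<integral>x. f x \<partial>post pi0 \<Phi> n)"
  have Ee: "E - f xs = e" using moments(1)[OF n J0] J0 by (simp add: E_def e_def field_simps)
  define Z where "Z = Zn pi0 \<Phi> n"
  have Zp: "Z > 0" using J0 by (simp add: Z_def Zn_eq)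
  define d where "d x = exp (- real n * \<Phi> x) / Z" for x
  have dm: "(\<lambda>x. ennreal (d x)) \<in> borel_measurable (prior pi0)"
    unfolding d_def by measurable
  have "post pi0 \<Phi> n = density (prior pi0) (\<lambda>x. ennreal (d x))"
    by (simp add: post_def d_def Z_def)
  from P.RN_deriv_unique[OF dm this[symmetric]]
  have ae: "AE x in prior pi0. ennreal (d x) = RN_deriv (prior pi0) (post pi0 \<Phi> n) x" .
  have "snis_asym_var (post pi0 \<Phi> n) (prior pi0) f
      = (\<integral>x. (enn2real (RN_deriv (prior pi0) (post pi0 \<Phi> n) x))\<^sup>2 * (f x - E)\<^sup>2 \<partial>prior pi0)"
    by (simp add: snis_asym_var_def E_def)
  also have "\<dots> = (\<integral>x. (d x)\<^sup>2 * (f x - E)\<^sup>2 \<partial>prior pi0)"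
  proof (rule integral_cong_AE)
    show "(\<lambda>x. (enn2real (RN_deriv (prior pi0) (post pi0 \<Phi> n) x))\<^sup>2 * (f x - E)\<^sup>2) \<in> borel_measurable (prior pi0)"
      by measurable
    show "(\<lambda>x. (d x)\<^sup>2 * (f x - E)\<^sup>2) \<in> borel_measurable (prior pi0)"
      unfolding d_def by measurable
    show "AE x in prior pi0. (enn2real (RN_deriv (prior pi0) (post pi0 \<Phi> n) x))\<^sup>2 * (f x - E)\<^sup>2 = (d x)\<^sup>2 * (f x - E)\<^sup>2"
      using ae
    proof eventually_elim
      case (elim x)
      have "d x \<ge> 0" using Zp by (simp add: d_def)
      then have "enn2real (RN_deriv (prior pi0) (post pi0 \<Phi> n) x) = d x"
        using elim[symmetric] by simp
      then show ?case by simp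
    qed
  qed
  also have "\<dots> = (\<integral>x. pi0 x * ((d x)\<^sup>2 * (f x - E)\<^sup>2) \<partial>lborel)"
    by (rule prior_int) (unfold d_def, measurable)
  also have "\<dots> = (\<integral>x. pi0 x * exp (- real (2*n) * psi x) * (f x - E)\<^sup>2 / (J n 0)\<^sup>2 \<partial>lborel)"
  proof (rule Bochner_Integration.integral_cong[OF refl])
    fix x
    have "d x = exp (- real n * psi x) / J n 0" unfolding d_def Z_def by (rule dens_eq[OF J0])
    moreover have "(exp (- real n * psi x))\<^sup>2 = exp (- real (2*n) * psi x)"
      by (simp add: power2_eq_square flip: exp_add)
    ultimately show "pi0 x * ((d x)\<^sup>2 * (f x - E)\<^sup>2) = pi0 x * exp (- real (2*n) * psi x) * (f x - E)\<^sup>2 / (J n 0)\<^sup>2"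
      by (simp add: power_divide)
  qed
  also have "\<dots> = (\<integral>x. pi0 x * exp (- real (2*n) * psi x) * (f x - E)\<^sup>2 \<partial>lborel) / (J n 0)\<^sup>2"
    by (rule integral_divide_zero)
  also have "\<dots> = (J (2*n) 2 - 2 * (E - f xs) * J (2*n) 1 + (E - f xs)\<^sup>2 * J (2*n) 0) / (J n 0)\<^sup>2"
    using G_lin(3)[of "2*n" E] n by simp
  finally show ?thesis unfolding Ee .
qed

end

lemma alg:
  fixes u aa ab ac ba bb bc :: real and D :: nat
  assumes u: "u > 0" and a: "aa \<noteq> 0"
  shows "(bc / u^(D+2) - 2 * ((ab/u^(D+1)) / (aa/u^D)) * (bb/u^(D+1)) + ((ab/u^(D+1)) / (aa/u^D))\<^sup>2 * (ba/u^D))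
          / (aa/u^D)\<^sup>2
       = u^D / u^2 * ((bc - 2 * ab * bb / aa + ab\<^sup>2 * ba / aa\<^sup>2) / aa\<^sup>2)"
    and "(ac/u^(D+2)) / (aa/u^D) - ((ab/u^(D+1)) / (aa/u^D))\<^sup>2 = (ac/aa - ab\<^sup>2/aa\<^sup>2) / u^2"
  using u a by (simp_all add: field_simps power_add power2_eq_square)

lemma sqrt_pow_powr: "x > 0 \<Longrightarrow> sqrt x ^ k = x powr (real k / 2)"
proof -
  assume x: "x > 0"
  have "sqrt x ^ k = (x powr (1/2)) ^ k" using x by (simp add: powr_half_sqrt)
  also have "\<dots> = x powr (real k * (1/2))" using x by (simp add: powr_power)
  finally show ?thesis by simp
qed

context lap begin

definition "A m j n = real n powr (real DIM('a) / 2 + real j / 2) * J (m * n) j"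

lemma A_lim: "m \<ge> 1 \<Longrightarrow> j \<le> 2 \<Longrightarrow> A m j \<longlonglongrightarrow> LL m j"
  using laplace(1)[of m j] unfolding A_def[abs_def] J_def by simp

lemma J_A: "n \<ge> 1 \<Longrightarrow> J (m * n) j = A m j n / sqrt (real n) ^ (DIM('a) + j)"
proof -
  assume n: "n \<ge> 1"
  have "real n powr (real DIM('a) / 2 + real j / 2) = sqrt (real n) ^ (DIM('a) + j)"
    using sqrt_pow_powr[of "real n" "DIM('a) + j"] n by (simp add: add_divide_distrib)
  moreover have "sqrt (real n) ^ (DIM('a) + j) > 0" using n by simp
  ultimately show ?thesis using n by (simp add: A_def)
qed

theorem main:
  shows "(\<exists>c>0. (\<lambda>n. snis_asym_var (post pi0 \<Phi> n) (prior pi0) f)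
                 \<sim>[at_top] (\<lambda>n. c * real n powr (real DIM('a) / 2 - 1)))
       \<and> (\<exists>c'>0. (\<lambda>n. snis_asym_var (post pi0 \<Phi> n) (prior pi0) f / var_meas (post pi0 \<Phi> n) f)
                 \<sim>[at_top] (\<lambda>n. c' * real n powr (real DIM('a) / 2)))"
proof -
  define D where "D = DIM('a)"
  define R where "R n = (A 2 2 n - 2 * A 1 1 n * A 2 1 n / A 1 0 n + (A 1 1 n)\<^sup>2 * A 2 0 n / (A 1 0 n)\<^sup>2) / (A 1 0 n)\<^sup>2" for n
  define V where "V n = A 1 2 n / A 1 0 n - (A 1 1 n)\<^sup>2 / (A 1 0 n)\<^sup>2" for n
  have L10: "LL 1 0 > 0" and L12: "LL 1 2 > 0" and L22: "LL 2 2 > 0" and L11: "LL 1 1 = 0"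
    using LL0[of 1] LL2[of 1] LL2[of 2] LL1[of 1] by auto
  define c where "c = LL 2 2 / (LL 1 0)\<^sup>2"
  define c' where "c' = c / (LL 1 2 / LL 1 0)"
  have cpos: "c > 0" and c'pos: "c' > 0" using L10 L12 L22 by (auto simp: c_def c'_def)
  have Rlim: "R \<longlonglongrightarrow> (LL 2 2 - 2 * LL 1 1 * LL 2 1 / LL 1 0 + (LL 1 1)\<^sup>2 * LL 2 0 / (LL 1 0)\<^sup>2) / (LL 1 0)\<^sup>2"
    unfolding R_def[abs_def] using L10
    by (intro tendsto_intros A_lim) auto
  then have Rlim': "R \<longlonglongrightarrow> c" by (simp add: L11[simplified] c_def)
  have Vlim: "V \<longlonglongrightarrow> LL 1 2 / LL 1 0 - (LL 1 1)\<^sup>2 / (LL 1 0)\<^sup>2"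
    unfolding V_def[abs_def] using L10
    by (intro tendsto_intros A_lim) auto
  then have Vlim': "V \<longlonglongrightarrow> LL 1 2 / LL 1 0" by (simp add: L11[simplified])
  have ev1: "eventually (\<lambda>n. A 1 0 n > 0) sequentially"
    using order_tendstoD(1)[OF A_lim[of 1 0] L10] by simp
  have ev2: "eventually (\<lambda>n. V n > 0) sequentially"
    using order_tendstoD(1)[OF Vlim'] L10 L12 by simp
  have ev: "eventually (\<lambda>n. n \<ge> 1 \<and> A 1 0 n > 0 \<and> V n > 0) sequentially"
    using eventually_conj[OF eventually_ge_at_top[of "1::nat"] eventually_conj[OF ev1 ev2]] by simp
  have key: "snis_asym_var (post pi0 \<Phi> n) (prior pi0) f = real n powr (real D / 2 - 1) * R n
      \<and> var_meas (post pi0 \<Phi> n) f = V n / real n"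
    if n: "n \<ge> 1" and Apos: "A 1 0 n > 0" for n
  proof -
    define u where "u = sqrt (real n)"
    have u: "u > 0" using n by (simp add: u_def)
    have J1: "J n j = A 1 j n / u ^ (D + j)" for j using J_A[OF n, of 1 j] by (simp add: u_def D_def)
    have J2: "J (2 * n) j = A 2 j n / u ^ (D + j)" for j using J_A[OF n, of 2 j] by (simp add: u_def D_def)
    have J0: "J n 0 > 0" using Apos u by (simp add: J1)
    have Aneq: "A 1 0 n \<noteq> 0" using Apos by simp
    have pw: "real n powr (real D / 2 - 1) = u ^ D / u ^ 2"
    proof -
      have a: "real n powr (real D / 2 - 1) = real n powr (real D / 2) / real n"
        using n by (simp add: powr_diff)
      have b: "real n powr (real D / 2) = u ^ D" using sqrt_pow_powr[of "real n" D] n by (simp add: u_def)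
      have c: "u ^ 2 = real n" using n by (simp add: u_def)
      show ?thesis unfolding a b c ..
    qed
    have "snis_asym_var (post pi0 \<Phi> n) (prior pi0) f = u ^ D / u ^ 2 * R n"
      unfolding snis_eq[OF n J0] J1 J2 R_def
      using alg(1)[OF u Aneq, where bc="A 2 2 n" and ab="A 1 1 n" and bb="A 2 1 n" and ba="A 2 0 n" and D=D] by (simp add: add.commute)
    moreover have "var_meas (post pi0 \<Phi> n) f = V n / real n"
    proof -
      have "var_meas (post pi0 \<Phi> n) f = V n / u ^ 2"
        unfolding moments(2)[OF n J0] J1 V_def
        using alg(2)[OF u Aneq, where ac="A 1 2 n" and ab="A 1 1 n" and D=D] by (simp add: add.commute)
      then show ?thesis using n by (simp add: u_def)
    qed
    ultimately show ?thesis using pw by simp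
  qed
  have pwD: "real n powr (real D / 2) = real n powr (real D / 2 - 1) * real n" if "n \<ge> 1" for n :: nat
    using that by (simp add: powr_diff)
  have "(\<lambda>n. snis_asym_var (post pi0 \<Phi> n) (prior pi0) f) \<sim>[at_top] (\<lambda>n. c * real n powr (real D / 2 - 1))"
  proof (rule asymp_equivI')
    have "(\<lambda>n. R n / c) \<longlonglongrightarrow> c / c" by (intro tendsto_intros Rlim') (use cpos in auto)
    then have "(\<lambda>n. R n / c) \<longlonglongrightarrow> 1" using cpos by simp
    then show "(\<lambda>n. snis_asym_var (post pi0 \<Phi> n) (prior pi0) f / (c * real n powr (real D / 2 - 1))) \<longlonglongrightarrow> 1"
    proof (rule Lim_transform_eventually)
      show "eventually (\<lambda>n. R n / c = snis_asym_var (post pi0 \<Phi> n) (prior pi0) f / (c * real n powr (real D / 2 - 1))) sequentially"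
        using ev
      proof eventually_elim
        case (elim n)
        have "real n powr (real D / 2 - 1) > 0" using elim by simp
        then show ?case using key[of n] elim cpos by simp
      qed
    qed
  qed
  moreover have "(\<lambda>n. snis_asym_var (post pi0 \<Phi> n) (prior pi0) f / var_meas (post pi0 \<Phi> n) f)
      \<sim>[at_top] (\<lambda>n. c' * real n powr (real D / 2))"
  proof (rule asymp_equivI')
    have lim: "(\<lambda>n. R n / (V n * c')) \<longlonglongrightarrow> c / (LL 1 2 / LL 1 0 * c')"
      by (intro tendsto_intros Rlim' Vlim') (use c'pos L10 L12 in auto)
    have one: "c / (LL 1 2 / LL 1 0 * c') = 1" using L10 L12 cpos by (simp add: c'_def)
    from lim[unfolded one] have "(\<lambda>n. R n / (V n * c')) \<longlonglongrightarrow> 1" .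
    then show "(\<lambda>n. snis_asym_var (post pi0 \<Phi> n) (prior pi0) f / var_meas (post pi0 \<Phi> n) f
        / (c' * real n powr (real D / 2))) \<longlonglongrightarrow> 1"
    proof (rule Lim_transform_eventually)
      show "eventually (\<lambda>n. R n / (V n * c') = snis_asym_var (post pi0 \<Phi> n) (prior pi0) f / var_meas (post pi0 \<Phi> n) f
        / (c' * real n powr (real D / 2))) sequentially"
        using ev
      proof eventually_elim
        case (elim n)
        have p: "real n powr (real D / 2 - 1) > 0" using elim by simp
        have nn: "real n > 0" using elim by simp
        show ?case using key[of n] elim c'pos p nn unfolding pwD[OF conjunct1[OF elim]]
          by (simp add: field_simps)
      qed
    qed
  qed
  ultimately show ?thesis using cpos c'pos unfolding D_def by blast
qed

end

theorem lemma2: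
  fixes pi0 \<Phi> f :: "'a::euclidean_space \<Rightarrow> real" and xs :: 'a
  assumes pi0_nonneg: "\<And>x. pi0 x \<ge> 0"
    and prob: "prob_space (prior pi0)"
    and pi0_C4: "Ck_on 4 UNIV pi0"
    and Phi_meas: "\<Phi> \<in> borel_measurable borel"
    and xs_int: "xs \<in> interior {x. pi0 x > 0}"
    and sep: "\<And>r. r > 0 \<Longrightarrow> \<exists>\<delta>>0. \<forall>x\<in>{x. pi0 x > 0}. dist x xs > r \<longrightarrow> \<Phi> x - \<Phi> xs \<ge> \<delta>"
    and Phi_C5: "\<exists>U. open U \<and> xs \<in> U \<and> Ck_on 5 U \<Phi>"
    and hess: "hessian_pos_def \<Phi> xs"
    and pi0_xs: "pi0 xs \<noteq> 0"
    and f_C4: "Ck_on 4 UNIV f"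
    and f_L1: "integrable (prior pi0) f"
    and grad: "frechet_derivative f (at xs) \<noteq> (\<lambda>_. 0)"
    and fin: "\<And>n g. n \<ge> 1 \<Longrightarrow> g \<in> {pi0, (\<lambda>x. f x * pi0 x), (\<lambda>x. (f x)\<^sup>2 * pi0 x)} \<Longrightarrow>
               set_integrable lborel {x. pi0 x > 0} (\<lambda>x. g x * exp (- real n * \<Phi> x))"
  shows "(\<exists>c>0. (\<lambda>n. snis_asym_var (post pi0 \<Phi> n) (prior pi0) f)
                 \<sim>[at_top] (\<lambda>n. c * real n powr (real DIM('a) / 2 - 1)))
       \<and> (\<exists>c'>0. (\<lambda>n. snis_asym_var (post pi0 \<Phi> n) (prior pi0) f / var_meas (post pi0 \<Phi> n) f)
                 \<sim>[at_top] (\<lambda>n. c' * real n powr (real DIM('a) / 2)))"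
  proof -
  interpret L: lap pi0 \<Phi> f xs
    by (rule lap.intro[OF pi0_nonneg prob pi0_C4 Phi_meas xs_int sep Phi_C5 hess pi0_xs f_C4 f_L1 grad fin])
  show ?thesis by (rule L.main)
qed

end
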